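(* Let $(M,\mathtt{g},\nabla)$ be a four-dimensional Riemann–Cartan spacetime, let $\{x^\mu\}$ be local coordinates, $\{\theta^{\mathbf{a}}\}$ an orthonormal coframe with $\theta^{\mathbf{a}}=h^{\mathbf{a}}_\mu dx^\mu$ and dual frame $e_{\mathbf{a}}=h^\mu_{\mathbf{a}}\partial_\mu$, and $\mathfrak{h}=\det(h^{\mathbf{a}}_\mu)$ (so $\sqrt{|\det\mathtt{g}|}=\mathfrak{h}^{-1}$ in the paper's convention). For an even section $\psi$ of $\mathcal{C}\ell(M,g)$ consider the Lagrangian density $$\mathfrak{L}(x,\psi,\partial\psi)=\Big[\big(\theta^{\mathbf{a}}\nabla^{(s)}_{e_{\mathbf{a}}}\psi\,\theta^{0}\theta^{2}\theta^{1}\big)\cdot\psi-m\,\psi\cdot\psi\Big]\mathfrak{h}^{-1},\qquad \nabla^{(s)}_{e_{\mathbf{a}}}\psi=\partial_{e_{\mathbf{a}}}\psi+\tfrac12\omega_{e_{\mathbf{a}}}\psi,$$ with $m$ a real constant. Then the Euler–Lagrange equation $\partial_\psi\mathfrak{L}-\partial_\mu(\partial_{\partial_\mu\psi}\mathfrak{L})=0$ is equivalent to $$\theta^{\mathbf{a}}\nabla^{(s)}_{e_{\mathbf{a}}}\psi\,\theta^{0}\theta^{2}\theta^{1}+\tfrac12 T\psi\,\theta^{0}\theta^{2}\theta^{1}-m\psi=0,$$ equivalently (multiplying on the right by $\theta^0$) $\theta^{\mathbf{a}}\nabla^{(s)}_{e_{\mathbf{a}}}\psi\,\theta^2\theta^1+\tfrac12T\psi\,\theta^2\theta^1-m\psi\theta^0=0$,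 where $T=T^{\ \mathbf{b}}_{\mathbf{ab}}\theta^{\mathbf{a}}$ is the torsion covector. In particular, when $\nabla$ is torsion free ($T=0$) this reduces to the free Dirac–Hestenes equation.
   Context: A Riemann–Cartan spacetime is a four-dimensional oriented, time-oriented Lorentzian manifold $(M,\mathtt{g})$ (signature $(1,3)$) with a metric-compatible connection $\nabla$, possibly with curvature and torsion; $\nabla$ also acts on the Clifford bundle $\mathcal{C}\ell(M,g)$ (Clifford algebras of $(T_x^*M,g_x)$, product by juxtaposition). $\omega_{e_{\mathbf{a}}}=\frac12\omega_{\mathbf{a}}^{\ \mathbf{bc}}\theta_{\mathbf{b}}\wedge\theta_{\mathbf{c}}$ where $\nabla_{e_{\mathbf{a}}}\theta^{\mathbf{b}}=-\omega_{\mathbf{a}}^{\ \mathbf{bc}}\theta_{\mathbf{c}}$, $\{\theta_{\mathbf{a}}\}$ the reciprocal coframe; equivalently $\nabla_{e_{\mathbf{a}}}e_{\mathbf{b}}=\omega^{\ \mathbf{c}}_{\mathbf{ab}}e_{\mathbf{c}}$. $\partial_{e_{\mathbf{a}}}$ is the Pfaff derivative ($\partial_{e_{\mathbf{a}}}(A^I\theta_I)=e_{\mathbf{a}}(A^I)\theta_I$). The scalar product of Clifford fields is $X\cdot Y=\langle\tilde XY\rangle_0$ extended so that different grades are orthogonal. $[e_{\mathbf{a}},e_{\mathbf{b}}]=c^{\ \mathbf{c}}_{\mathbf{ab}}e_{\mathbf{c}}$, and the torsion components are $T^{\ \mathbf{c}}_{\mathbf{ab}}=\omega^{\ \mathbf{c}}_{\mathbf{ab}}-\omega^{\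 \mathbf{c}}_{\mathbf{ba}}-c^{\ \mathbf{c}}_{\mathbf{ab}}$, i.e. $\nabla_{e_{\mathbf{a}}}e_{\mathbf{b}}-\nabla_{e_{\mathbf{b}}}e_{\mathbf{a}}-[e_{\mathbf{a}},e_{\mathbf{b}}]=T^{\ \mathbf{c}}_{\mathbf{ab}}e_{\mathbf{c}}$. $\partial_\psi$ and $\partial_{\partial_\mu\psi}$ denote the multivector (variational) derivatives with respect to the even Clifford field $\psi$ and its coordinate derivatives $\partial_\mu\psi$, the Lagrangian being regarded as a function of $\psi$ and $\partial_\mu\psi$ via $\partial_{e_{\mathbf{a}}}\psi=h^\mu_{\mathbf{a}}\partial_\mu\psi$. *)

theory Defs
  imports "HOL-Analysis.Analysis"
begin

text \<open>Coordinates x are points of real^4 (a chart domain U).  The Clifford algebra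
  Cl(1,3) of a cotangent space is represented via the orthonormal coframe
  theta^0..theta^3 (upper indices) as the 16-dimensional space real^(4 set):
  the component at K is the coefficient of the basis blade theta^K
  (product of the theta^k, k in K, in increasing order).\<close>

type_synonym mv = "real ^ (4 set)"

definition eta :: "4 \<Rightarrow> real" where
  "eta k = (if k = 0 then 1 else -1)"

text \<open>Sign of the product of basis blades: theta^I theta^J = blade_sign I J theta^(I sym-diff J).\<close>
definition blade_sign :: "4 set \<Rightarrow> 4 set \<Rightarrow> real" where
  "blade_sign I J = (-1) ^ card {(i, j). i \<in> I \<and> j \<in> J \<and> j < i} * (\<Prod>k\<in>I \<inter> J. eta k)"

definition blade :: "4 set \<Rightarrow> mv" where
  "blade I = (\<chi> K. if K = I then 1 else 0)"

definition cmul :: "mv \<Rightarrow> mv \<Rightarrow> mv" where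
  "cmul A B = (\<chi> K. \<Sum>I\<in>UNIV. \<Sum>J\<in>UNIV.
      (if (I - J) \<union> (J - I) = K then blade_sign I J * (A $ I) * (B $ J) else 0))"

text \<open>Generator theta^a (upper index) and reciprocal theta_a = eta_aa theta^a.\<close>
definition gen :: "4 \<Rightarrow> mv" where
  "gen a = blade {a}"

definition gen_low :: "4 \<Rightarrow> mv" where
  "gen_low a = eta a *\<^sub>R gen a"

definition wedge2 :: "mv \<Rightarrow> mv \<Rightarrow> mv" where
  "wedge2 u v = (1/2) *\<^sub>R (cmul u v - cmul v u)"

definition rev_mv :: "mv \<Rightarrow> mv" where
  "rev_mv A = (\<chi> K. (-1) ^ (card K * (card K - 1) div 2) * A $ K)"

definition scal :: "mv \<Rightarrow> real" where
  "scal A = A $ {}"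

definition sprod :: "mv \<Rightarrow> mv \<Rightarrow> real" where
  "sprod X Y = scal (cmul (rev_mv X) Y)"

definition even_mv :: "mv \<Rightarrow> bool" where
  "even_mv A \<longleftrightarrow> (\<forall>K. odd (card K) \<longrightarrow> A $ K = 0)"

text \<open>Reciprocal basis blade theta^I (with sprod (recip I) (blade J) = delta).\<close>
definition recip_blade :: "4 set \<Rightarrow> mv" where
  "recip_blade I = (1 / sprod (blade I) (blade I)) *\<^sub>R blade I"

definition mvderiv_even :: "(mv \<Rightarrow> real) \<Rightarrow> mv \<Rightarrow> mv" where
  "mvderiv_even f P =
     (\<Sum>K\<in>{K. even (card K)}. deriv (\<lambda>t. f (P + t *\<^sub>R blade K)) 0 *\<^sub>R recip_blade K)"

definition pd :: "4 \<Rightarrow> (real^4 \<Rightarrow> 'b::real_normed_vector) \<Rightarrow> real^4 \<Rightarrow> 'b" where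
  "pd \<mu> f x = frechet_derivative f (at x) (axis \<mu> 1)"

text \<open>h x $ a $ mu = h^a_mu (coframe theta^a = h^a_mu dx^mu);
  hinv h x $ mu $ a = h^mu_a (frame e_a = h^mu_a d_mu).\<close>
definition hinv :: "(real^4 \<Rightarrow> real^4^4) \<Rightarrow> real^4 \<Rightarrow> real^4^4" where
  "hinv h x = matrix_inv (h x)"

text \<open>Metric components g_{mu nu} = eta_ab h^a_mu h^b_nu (coframe orthonormal).\<close>
definition gmat :: "(real^4 \<Rightarrow> real^4^4) \<Rightarrow> real^4 \<Rightarrow> real^4^4" where
  "gmat h x = (\<chi> \<mu> \<nu>. \<Sum>a\<in>UNIV. eta a * h x $ a $ \<mu> * h x $ a $ \<nu>)"

text \<open>Volume density sqrt |det g| (= 'frak h^{-1}' in the paper's convention).\<close>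
definition vol :: "(real^4 \<Rightarrow> real^4^4) \<Rightarrow> real^4 \<Rightarrow> real" where
  "vol h x = sqrt \<bar>det (gmat h x)\<bar>"

text \<open>Structure coefficients: [e_a, e_b] = c_ab^c e_c.\<close>
definition cstr :: "(real^4 \<Rightarrow> real^4^4) \<Rightarrow> real^4 \<Rightarrow> 4 \<Rightarrow> 4 \<Rightarrow> 4 \<Rightarrow> real" where
  "cstr h x a b c = (\<Sum>\<nu>\<in>UNIV. \<Sum>\<mu>\<in>UNIV. h x $ c $ \<nu> *
      (hinv h x $ \<mu> $ a * pd \<mu> (\<lambda>y. hinv h y $ \<nu> $ b) x
       - hinv h x $ \<mu> $ b * pd \<mu> (\<lambda>y. hinv h y $ \<nu> $ a) x))"

text \<open>om x a b c = omega_a^{bc}, defined by nabla_{e_a} theta^b = - omega_a^{bc} theta_c.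
  conn_coef gives omega_ab^c with nabla_{e_a} e_b = omega_ab^c e_c,
  i.e. omega_ab^c = omega_a^{cd} eta_db.\<close>
definition conn_coef :: "(real^4 \<Rightarrow> 4 \<Rightarrow> 4 \<Rightarrow> 4 \<Rightarrow> real) \<Rightarrow> real^4 \<Rightarrow> 4 \<Rightarrow> 4 \<Rightarrow> 4 \<Rightarrow> real" where
  "conn_coef om x a b c = eta b * om x a c b"

definition torsion :: "(real^4 \<Rightarrow> real^4^4) \<Rightarrow> (real^4 \<Rightarrow> 4 \<Rightarrow> 4 \<Rightarrow> 4 \<Rightarrow> real)
    \<Rightarrow> real^4 \<Rightarrow> 4 \<Rightarrow> 4 \<Rightarrow> 4 \<Rightarrow> real" where
  "torsion h om x a b c = conn_coef om x a b c - conn_coef om x b a c - cstr h x a b c"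

definition torsion_cov :: "(real^4 \<Rightarrow> real^4^4) \<Rightarrow> (real^4 \<Rightarrow> 4 \<Rightarrow> 4 \<Rightarrow> 4 \<Rightarrow> real)
    \<Rightarrow> real^4 \<Rightarrow> mv" where
  "torsion_cov h om x = (\<Sum>a\<in>UNIV. (\<Sum>b\<in>UNIV. torsion h om x a b b) *\<^sub>R gen a)"

definition omega_mv :: "(real^4 \<Rightarrow> 4 \<Rightarrow> 4 \<Rightarrow> 4 \<Rightarrow> real) \<Rightarrow> real^4 \<Rightarrow> 4 \<Rightarrow> mv" where
  "omega_mv om x a = (1/2) *\<^sub>R (\<Sum>b\<in>UNIV. \<Sum>c\<in>UNIV. om x a b c *\<^sub>R wedge2 (gen_low b) (gen_low c))"

text \<open>nabla^(s)_{e_a} psi = d_{e_a} psi + 1/2 omega_{e_a} psi, where P is the value of psi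
  and Q mu the value of d_mu psi (so d_{e_a} psi = h^mu_a Q mu).\<close>
definition spin_cov :: "(real^4 \<Rightarrow> real^4^4) \<Rightarrow> (real^4 \<Rightarrow> 4 \<Rightarrow> 4 \<Rightarrow> 4 \<Rightarrow> real)
    \<Rightarrow> real^4 \<Rightarrow> mv \<Rightarrow> (4 \<Rightarrow> mv) \<Rightarrow> 4 \<Rightarrow> mv" where
  "spin_cov h om x P Q a =
     (\<Sum>\<mu>\<in>UNIV. hinv h x $ \<mu> $ a *\<^sub>R Q \<mu>) + (1/2) *\<^sub>R cmul (omega_mv om x a) P"

definition dirac_op :: "(real^4 \<Rightarrow> real^4^4) \<Rightarrow> (real^4 \<Rightarrow> 4 \<Rightarrow> 4 \<Rightarrow> 4 \<Rightarrow> real)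
    \<Rightarrow> real^4 \<Rightarrow> mv \<Rightarrow> (4 \<Rightarrow> mv) \<Rightarrow> mv \<Rightarrow> mv" where
  "dirac_op h om x P Q G = (\<Sum>a\<in>UNIV. cmul (cmul (gen a) (spin_cov h om x P Q a)) G)"

definition gamma021 :: mv where
  "gamma021 = cmul (cmul (gen 0) (gen 2)) (gen 1)"

definition gamma21 :: mv where
  "gamma21 = cmul (gen 2) (gen 1)"

definition lagr :: "(real^4 \<Rightarrow> real^4^4) \<Rightarrow> (real^4 \<Rightarrow> 4 \<Rightarrow> 4 \<Rightarrow> 4 \<Rightarrow> real) \<Rightarrow> real
    \<Rightarrow> real^4 \<Rightarrow> mv \<Rightarrow> (4 \<Rightarrow> mv) \<Rightarrow> real" where
  "lagr h om m x P Q = (sprod (dirac_op h om x P Q gamma021) P - m * sprod P P) * vol h x"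

definition euler_lagrange :: "(real^4 \<Rightarrow> real^4^4) \<Rightarrow> (real^4 \<Rightarrow> 4 \<Rightarrow> 4 \<Rightarrow> 4 \<Rightarrow> real) \<Rightarrow> real
    \<Rightarrow> (real^4 \<Rightarrow> mv) \<Rightarrow> real^4 \<Rightarrow> mv" where
  "euler_lagrange h om m \<psi> x =
     mvderiv_even (\<lambda>P. lagr h om m x P (\<lambda>\<nu>. pd \<nu> \<psi> x)) (\<psi> x)
     - (\<Sum>\<mu>\<in>UNIV. pd \<mu> (\<lambda>y. mvderiv_even
            (\<lambda>R. lagr h om m y (\<psi> y) ((\<lambda>\<nu>. pd \<nu> \<psi> y)(\<mu> := R))) (pd \<mu> \<psi> y)) x)"

end

theory Submission
  imports Defs
begin

definition sd :: "4 set \<Rightarrow> 4 set \<Rightarrow> 4 set" where "sd I J = (I - J) \<union> (J - I)"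
definition ninv :: "4 set \<Rightarrow> 4 set \<Rightarrow> nat" where
  "ninv I J = card {(i, j). i \<in> I \<and> j \<in> J \<and> j < i}"
definition psg :: "4 set \<Rightarrow> 4 set \<Rightarrow> real" where "psg I J = (-1) ^ ninv I J"
definition EE :: "4 set \<Rightarrow> real" where "EE S = (\<Prod>k\<in>S. eta k)"

lemma blade_sign_alt: "blade_sign I J = psg I J * EE (I \<inter> J)"
  by (simp add: blade_sign_def psg_def ninv_def EE_def)

lemma prod_sd:
  fixes f :: "4 \<Rightarrow> real"
  assumes "\<And>x. f x * f x = 1"
  shows "prod f (sd I J) = prod f I * prod f J"
proof -
  have a: "prod f I = prod f (I - J) * prod f (I \<inter> J)"
    using prod.Int_Diff[of I f J] by (simp add: mult.commute)
  have b: "prod f J = prod f (J - I) * prod f (I \<inter> J)"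
    using prod.Int_Diff[of J f I] by (simp add: mult.commute Int_commute)
  have c: "prod f (I \<inter> J) * prod f (I \<inter> J) = 1"
    by (simp add: assms flip: prod.distrib)
  have d: "prod f (sd I J) = prod f (I - J) * prod f (J - I)"
    unfolding sd_def by (rule prod.union_disjoint) auto
  have "prod f I * prod f J = (prod f (I - J) * prod f (J - I)) * (prod f (I \<inter> J) * prod f (I \<inter> J))"
    unfolding a b by (simp only: ac_simps)
  then show ?thesis using c d by simp
qed

lemma eta_sq: "eta k * eta k = 1" by (simp add: eta_def)

lemma ninv_left: "ninv A M = (\<Sum>i\<in>A. card {j\<in>M. j < i})"
proof -
  have "{(i, j). i \<in> A \<and> j \<in> M \<and> j < i} = Sigma A (\<lambda>i. {j\<in>M. j < i})" by auto
  then show ?thesis unfolding ninv_def by (simp add: card_SigmaI)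
qed

lemma ninv_right: "ninv A M = (\<Sum>j\<in>M. card {i\<in>A. j < i})"
proof -
  have "{(i, j). i \<in> A \<and> j \<in> M \<and> j < i} = (\<lambda>(j,i). (i,j)) ` Sigma M (\<lambda>j. {i\<in>A. j < i})" by auto
  moreover have "inj_on (\<lambda>(j,i). (i,j)) (Sigma M (\<lambda>j. {i\<in>A. j < i}))" by (auto simp: inj_on_def)
  ultimately show ?thesis unfolding ninv_def by (simp add: card_image card_SigmaI)
qed

lemma psg_left: "psg (sd I J) M = psg I M * psg J M"
proof -
  have "\<And>A. psg A M = (\<Prod>i\<in>A. (-1::real) ^ card {j\<in>M. j < i})"
    by (simp add: psg_def ninv_left power_sum)
  then show ?thesis by (simp add: prod_sd power_mult_distrib[symmetric] flip: power_add)
qed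

lemma psg_right: "psg M (sd I J) = psg M I * psg M J"
proof -
  have "\<And>A. psg M A = (\<Prod>j\<in>A. (-1::real) ^ card {i\<in>M. j < i})"
    by (simp add: psg_def ninv_right power_sum)
  then show ?thesis by (simp add: prod_sd flip: power_add)
qed

lemma psg_sq: "psg I J * psg I J = 1"
  by (simp add: psg_def flip: power_add)

lemma EE_sd: "EE (sd I J) = EE I * EE J"
  unfolding EE_def by (rule prod_sd[OF eta_sq])

lemma EE_sq: "EE S * EE S = 1"
  unfolding EE_def by (simp add: eta_sq flip: prod.distrib)

lemma sd_Int: "sd I J \<inter> M = sd (I \<inter> M) (J \<inter> M)" unfolding sd_def by auto
lemma Int_sd: "M \<inter> sd I J = sd (M \<inter> I) (M \<inter> J)" unfolding sd_def by auto
lemma sd_assoc: "sd (sd I J) K = sd I (sd J K)" unfolding sd_def by auto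
lemma sd_comm: "sd I J = sd J I" unfolding sd_def by auto

lemma cocycle: "blade_sign I J * blade_sign (sd I J) K = blade_sign J K * blade_sign I (sd J K)"
  unfolding blade_sign_alt psg_left psg_right sd_Int Int_sd EE_sd
  by (simp add: Int_commute ac_simps)

lemma ninv_self: "2 * ninv K K = card K * card K - card K"
proof -
  let ?A = "{(i, j). i \<in> K \<and> j \<in> K \<and> j < i}"
  let ?B = "{(i, j). i \<in> K \<and> j \<in> K \<and> i < j}"
  let ?D = "(\<lambda>i. (i, i)) ` K"
  have AB: "?A \<union> ?B = K \<times> K - ?D" by (auto simp: neq_iff)
  have dis: "?A \<inter> ?B = {}" by auto
  have "?B = (\<lambda>(i,j). (j,i)) ` ?A" by auto
  moreover have "inj_on (\<lambda>(i,j). (j,i)) ?A" by (auto simp: inj_on_def)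
  ultimately have cB: "card ?B = card ?A" by (simp add: card_image)
  have "card (?A \<union> ?B) = card ?A + card ?B"
    by (rule card_Un_disjoint) (use dis in auto)
  moreover have "card (K \<times> K - ?D) = card K * card K - card K"
    by (subst card_Diff_subset) (auto simp: card_image inj_on_def card_cartesian_product)
  ultimately show ?thesis unfolding ninv_def using AB cB by simp
qed

lemma rev_sign_psg: "(-1::real) ^ (card K * (card K - 1) div 2) = psg K K"
proof -
  have "card K * (card K - 1) = card K * card K - card K" by (simp add: diff_mult_distrib2)
  then have "card K * (card K - 1) div 2 = ninv K K" using ninv_self[of K] by simp
  then show ?thesis by (simp add: psg_def)
qed

lemma rev_sign_id: "blade_sign I J * psg (sd I J) (sd I J) = psg I I * psg J J * blade_sign J I"
proof -
  have "psg (sd I J) (sd I J) = psg I I * psg I J * (psg J I * psg J J)"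
    by (simp add: psg_left psg_right)
  then show ?thesis unfolding blade_sign_alt
    by (simp add: Int_commute) (metis (no_types, lifting) mult.assoc mult.left_commute mult_1_right psg_sq)
qed

lemma blade_nth: "blade I $ K = (if K = I then 1 else 0)"
  by (simp add: blade_def)

lemma sum_ind: "(\<Sum>j\<in>(UNIV::'a::finite set). f j * (if j = a then 1 else (0::real))) = f a"
proof -
  have "(\<Sum>j\<in>(UNIV::'a set). f j * (if j = a then 1 else (0::real))) = (\<Sum>j\<in>(UNIV::'a set). if j = a then f j else 0)"
    by (rule sum.cong) auto
  also have "\<dots> = f a" by (simp add: sum.delta')
  finally show ?thesis .
qed

lemma sum_ind': "(\<Sum>j\<in>(UNIV::'a::finite set). f j * (if a = j then 1 else (0::real))) = f a"
  using sum_ind[of f a] by (simp add: eq_commute[of a])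

lemma mv_expand: "A = (\<Sum>I\<in>UNIV. A $ I *\<^sub>R blade I)"
  unfolding vec_eq_iff sum_component vector_scaleR_component blade_nth
  by (simp only: sum_ind' real_scaleR_def) simp

lemma cmul_nth: "cmul A B $ K = (\<Sum>I\<in>UNIV. \<Sum>J\<in>UNIV. of_bool (sd I J = K) * blade_sign I J * A $ I * B $ J)"
  by (simp only: cmul_def sd_def vec_lambda_beta) (intro sum.cong refl, simp)

lemma cmul_blade: "cmul (blade I) (blade J) = blade_sign I J *\<^sub>R blade (sd I J)"
proof -
  have "cmul (blade I) (blade J) $ K = of_bool (sd I J = K) * blade_sign I J" for K
    unfolding cmul_nth blade_nth by (simp only: sum_ind)
  then show ?thesis unfolding vec_eq_iff by (simp add: blade_nth)
qed

lemma cmul_add_left: "cmul (A + B) C = cmul A C + cmul B C"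
  unfolding vec_eq_iff by (simp add: cmul_nth algebra_simps sum.distrib)
lemma cmul_add_right: "cmul C (A + B) = cmul C A + cmul C B"
  unfolding vec_eq_iff by (simp add: cmul_nth algebra_simps sum.distrib)
lemma cmul_scaleR_left: "cmul (c *\<^sub>R A) B = c *\<^sub>R cmul A B"
  unfolding vec_eq_iff by (simp add: cmul_nth algebra_simps sum_distrib_left)
lemma cmul_scaleR_right: "cmul A (c *\<^sub>R B) = c *\<^sub>R cmul A B"
  unfolding vec_eq_iff by (simp add: cmul_nth algebra_simps sum_distrib_left)

lemma bilinear_cmul: "bilinear cmul"
  unfolding bilinear_def
  by (auto intro!: linearI simp: cmul_add_left cmul_add_right cmul_scaleR_left cmul_scaleR_right)

lemma linear_cmul_left: "linear (\<lambda>A. cmul A B)"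
  using bilinear_cmul unfolding bilinear_def by simp
lemma linear_cmul_right: "linear (\<lambda>B. cmul A B)"
  using bilinear_cmul unfolding bilinear_def by simp

lemma cmul_sum_left: "cmul (sum f S) B = (\<Sum>i\<in>S. cmul (f i) B)"
  using linear_sum[OF linear_cmul_left] by simp
lemma cmul_sum_right: "cmul B (sum f S) = (\<Sum>i\<in>S. cmul B (f i))"
  using linear_sum[OF linear_cmul_right] by simp
lemma cmul_zero_left[simp]: "cmul 0 B = 0"
  using bilinear_lzero[OF bilinear_cmul] by simp
lemma cmul_zero_right[simp]: "cmul B 0 = 0"
  using bilinear_rzero[OF bilinear_cmul] by simp
lemma cmul_diff_left: "cmul (A - B) C = cmul A C - cmul B C"
  using bilinear_lsub[OF bilinear_cmul] by simp
lemma cmul_diff_right: "cmul C (A - B) = cmul C A - cmul C B"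
  using bilinear_rsub[OF bilinear_cmul] by simp
lemma cmul_neg_left: "cmul (- A) C = - cmul A C"
  using bilinear_lneg[OF bilinear_cmul] by simp
lemma cmul_neg_right: "cmul C (- A) = - cmul C A"
  using bilinear_rneg[OF bilinear_cmul] by simp

lemmas cmul_lin = cmul_add_left cmul_add_right cmul_scaleR_left cmul_scaleR_right
  cmul_sum_left cmul_sum_right cmul_diff_left cmul_diff_right cmul_neg_left cmul_neg_right

lemma cmul_expand_right: "cmul X C = (\<Sum>K\<in>UNIV. C $ K *\<^sub>R cmul X (blade K))"
proof -
  have "cmul X C = cmul X (\<Sum>K\<in>UNIV. C $ K *\<^sub>R blade K)" by (simp flip: mv_expand)
  then show ?thesis by (simp add: cmul_sum_right cmul_scaleR_right)
qed

lemma cmul_expand_left: "cmul C X = (\<Sum>K\<in>UNIV. C $ K *\<^sub>R cmul (blade K) X)"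
proof -
  have "cmul C X = cmul (\<Sum>K\<in>UNIV. C $ K *\<^sub>R blade K) X" by (simp flip: mv_expand)
  then show ?thesis by (simp add: cmul_sum_left cmul_scaleR_left)
qed

lemma cmul_expand: "cmul A B = (\<Sum>I\<in>UNIV. \<Sum>J\<in>UNIV. (A $ I * B $ J) *\<^sub>R cmul (blade I) (blade J))"
  apply (subst cmul_expand_left[of A B])
  apply (simp only: cmul_expand_right[where C=B] scaleR_sum_right scaleR_scaleR)
  done

lemma cmul_assoc_bbb: "cmul (cmul (blade I) (blade J)) (blade K) = cmul (blade I) (cmul (blade J) (blade K))"
proof -
  have "cmul (cmul (blade I) (blade J)) (blade K) = (blade_sign I J * blade_sign (sd I J) K) *\<^sub>R blade (sd (sd I J) K)"
    by (simp only: cmul_blade cmul_scaleR_left scaleR_scaleR)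
  also have "\<dots> = (blade_sign J K * blade_sign I (sd J K)) *\<^sub>R blade (sd I (sd J K))"
    by (simp only: cocycle sd_assoc)
  also have "\<dots> = cmul (blade I) (cmul (blade J) (blade K))"
    by (simp only: cmul_blade cmul_scaleR_right scaleR_scaleR mult.commute)
  finally show ?thesis .
qed

lemma cmul_assoc_bb: "cmul (cmul (blade I) (blade J)) C = cmul (blade I) (cmul (blade J) C)"
proof -
  have "cmul (cmul (blade I) (blade J)) C = (\<Sum>K\<in>UNIV. C $ K *\<^sub>R cmul (cmul (blade I) (blade J)) (blade K))"
    by (rule cmul_expand_right)
  also have "\<dots> = (\<Sum>K\<in>UNIV. C $ K *\<^sub>R cmul (blade I) (cmul (blade J) (blade K)))"
    by (simp only: cmul_assoc_bbb)
  also have "\<dots> = cmul (blade I) (\<Sum>K\<in>UNIV. C $ K *\<^sub>R cmul (blade J) (blade K))"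
    by (simp only: cmul_sum_right cmul_scaleR_right)
  also have "\<dots> = cmul (blade I) (cmul (blade J) C)"
    by (simp only: cmul_expand_right[of "blade J" C, symmetric])
  finally show ?thesis .
qed

lemma cmul_assoc_b: "cmul (cmul (blade I) B) C = cmul (blade I) (cmul B C)"
proof -
  have "cmul (cmul (blade I) B) C = cmul (\<Sum>J\<in>UNIV. B $ J *\<^sub>R cmul (blade I) (blade J)) C"
    by (simp only: cmul_expand_right[of "blade I" B])
  also have "\<dots> = (\<Sum>J\<in>UNIV. B $ J *\<^sub>R cmul (blade I) (cmul (blade J) C))"
    by (simp only: cmul_sum_left cmul_scaleR_left cmul_assoc_bb)
  also have "\<dots> = cmul (blade I) (\<Sum>J\<in>UNIV. B $ J *\<^sub>R cmul (blade J) C)"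
    by (simp only: cmul_sum_right cmul_scaleR_right)
  also have "\<dots> = cmul (blade I) (cmul B C)"
    by (simp only: cmul_expand_left[of B C, symmetric])
  finally show ?thesis .
qed

lemma cmul_assoc: "cmul (cmul A B) C = cmul A (cmul B C)"
proof -
  have "cmul (cmul A B) C = cmul (\<Sum>I\<in>UNIV. A $ I *\<^sub>R cmul (blade I) B) C"
    by (simp only: cmul_expand_left[of A B])
  also have "\<dots> = (\<Sum>I\<in>UNIV. A $ I *\<^sub>R cmul (blade I) (cmul B C))"
    by (simp only: cmul_sum_left cmul_scaleR_left cmul_assoc_b)
  also have "\<dots> = cmul A (cmul B C)"
    by (simp only: cmul_expand_left[of A "cmul B C", symmetric])
  finally show ?thesis .
qed

lemma rev_nth: "rev_mv A $ K = psg K K * A $ K"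
  by (simp only: rev_mv_def vec_lambda_beta rev_sign_psg)

lemma rev_blade: "rev_mv (blade I) = psg I I *\<^sub>R blade I"
  unfolding vec_eq_iff by (simp add: rev_nth blade_nth)

lemma rev_add: "rev_mv (A + B) = rev_mv A + rev_mv B"
  unfolding vec_eq_iff by (simp add: rev_nth algebra_simps)
lemma rev_scaleR: "rev_mv (c *\<^sub>R A) = c *\<^sub>R rev_mv A"
  unfolding vec_eq_iff by (simp add: rev_nth algebra_simps)
lemma linear_rev: "linear rev_mv"
  by (rule linearI) (simp_all add: rev_add rev_scaleR)
lemma rev_sum: "rev_mv (sum f S) = (\<Sum>i\<in>S. rev_mv (f i))"
  using linear_sum[OF linear_rev] by simp
lemma rev_diff: "rev_mv (A - B) = rev_mv A - rev_mv B"
  using linear_diff[OF linear_rev] by simp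
lemma rev_neg: "rev_mv (- A) = - rev_mv A"
  using linear_neg[OF linear_rev] by simp
lemma rev_zero[simp]: "rev_mv 0 = 0"
  using linear_0[OF linear_rev] by simp
lemma rev_rev[simp]: "rev_mv (rev_mv A) = A"
  unfolding vec_eq_iff by (simp add: rev_nth psg_sq flip: mult.assoc)

lemmas rev_lin = rev_add rev_scaleR rev_sum rev_diff rev_neg

lemma rev_cmul_bb: "rev_mv (cmul (blade I) (blade J)) = cmul (rev_mv (blade J)) (rev_mv (blade I))"
proof -
  have "rev_mv (cmul (blade I) (blade J)) = (blade_sign I J * psg (sd I J) (sd I J)) *\<^sub>R blade (sd I J)"
    by (simp add: cmul_blade rev_scaleR rev_blade)
  also have "\<dots> = (psg I I * psg J J * blade_sign J I) *\<^sub>R blade (sd J I)"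
    by (simp only: rev_sign_id) (simp only: sd_comm[of I J])
  also have "\<dots> = cmul (rev_mv (blade J)) (rev_mv (blade I))"
    by (simp add: rev_blade cmul_scaleR_left cmul_scaleR_right cmul_blade ac_simps)
  finally show ?thesis .
qed

lemma rev_cmul_b: "rev_mv (cmul (blade I) B) = cmul (rev_mv B) (rev_mv (blade I))"
proof -
  have "rev_mv (cmul (blade I) B) = rev_mv (\<Sum>J\<in>UNIV. B $ J *\<^sub>R cmul (blade I) (blade J))"
    by (simp only: cmul_expand_right[of "blade I" B])
  also have "\<dots> = (\<Sum>J\<in>UNIV. B $ J *\<^sub>R cmul (rev_mv (blade J)) (rev_mv (blade I)))"
    by (simp only: rev_sum rev_scaleR rev_cmul_bb)
  also have "\<dots> = cmul (rev_mv (\<Sum>J\<in>UNIV. B $ J *\<^sub>R blade J)) (rev_mv (blade I))"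
    by (simp only: rev_sum rev_scaleR cmul_sum_left cmul_scaleR_left)
  finally show ?thesis by (simp flip: mv_expand)
qed

lemma rev_cmul: "rev_mv (cmul A B) = cmul (rev_mv B) (rev_mv A)"
proof -
  have "rev_mv (cmul A B) = rev_mv (\<Sum>I\<in>UNIV. A $ I *\<^sub>R cmul (blade I) B)"
    by (simp only: cmul_expand_left[of A B])
  also have "\<dots> = (\<Sum>I\<in>UNIV. A $ I *\<^sub>R cmul (rev_mv B) (rev_mv (blade I)))"
    by (simp only: rev_sum rev_scaleR rev_cmul_b)
  also have "\<dots> = cmul (rev_mv B) (rev_mv (\<Sum>I\<in>UNIV. A $ I *\<^sub>R blade I))"
    by (simp only: rev_sum rev_scaleR cmul_sum_right cmul_scaleR_right)
  finally show ?thesis by (simp flip: mv_expand)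
qed

lemma sd_empty_iff: "sd I J = {} \<longleftrightarrow> J = I"
  unfolding sd_def by auto

lemma scal_cmul: "scal (cmul A B) = (\<Sum>I\<in>UNIV. blade_sign I I * A $ I * B $ I)"
proof -
  have "scal (cmul A B) = (\<Sum>I\<in>UNIV. \<Sum>J\<in>UNIV. (blade_sign I J * A $ I * B $ J) * (if J = I then 1 else 0))"
    unfolding scal_def cmul_nth sd_empty_iff by (intro sum.cong refl) (simp add: of_bool_def)
  then show ?thesis by (simp only: sum_ind)
qed

lemma scal_comm: "scal (cmul A B) = scal (cmul B A)"
  unfolding scal_cmul by (simp add: ac_simps)

lemma sprod_alt: "sprod X Y = (\<Sum>I\<in>UNIV. blade_sign I I * psg I I * X $ I * Y $ I)"
  unfolding sprod_def scal_cmul rev_nth by (simp add: ac_simps)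

lemma sprod_comm: "sprod X Y = sprod Y X"
  unfolding sprod_alt by (simp add: ac_simps)

lemma sprod_add_left: "sprod (A + B) C = sprod A C + sprod B C"
  unfolding sprod_alt by (simp add: algebra_simps sum.distrib)
lemma sprod_add_right: "sprod C (A + B) = sprod C A + sprod C B"
  unfolding sprod_alt by (simp add: algebra_simps sum.distrib)
lemma sprod_scaleR_left: "sprod (c *\<^sub>R A) B = c * sprod A B"
  unfolding sprod_alt by (simp add: algebra_simps sum_distrib_left)
lemma sprod_scaleR_right: "sprod A (c *\<^sub>R B) = c * sprod A B"
  unfolding sprod_alt by (simp add: algebra_simps sum_distrib_left)
lemma sprod_sum_left: "sprod (sum f S) B = (\<Sum>i\<in>S. sprod (f i) B)"
  unfolding sprod_alt by (simp add: sum_distrib_left sum_distrib_right ac_simps) (rule sum.swap)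
lemma sprod_sum_right: "sprod B (sum f S) = (\<Sum>i\<in>S. sprod B (f i))"
  unfolding sprod_alt by (simp add: sum_distrib_left sum_distrib_right ac_simps) (rule sum.swap)
lemma sprod_diff_left: "sprod (A - B) C = sprod A C - sprod B C"
  unfolding sprod_alt by (simp add: algebra_simps sum_subtractf)
lemma sprod_diff_right: "sprod C (A - B) = sprod C A - sprod C B"
  unfolding sprod_alt by (simp add: algebra_simps sum_subtractf)
lemma sprod_zero_left[simp]: "sprod 0 B = 0" unfolding sprod_alt by simp
lemma sprod_zero_right[simp]: "sprod B 0 = 0" unfolding sprod_alt by simp

lemma sprod_adj_left: "sprod (cmul A B) C = sprod B (cmul (rev_mv A) C)"
  unfolding sprod_def rev_cmul cmul_assoc ..

lemma sprod_adj_right: "sprod (cmul B A) C = sprod B (cmul C (rev_mv A))"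
proof -
  have "sprod (cmul B A) C = scal (cmul (rev_mv A) (cmul (rev_mv B) C))"
    unfolding sprod_def rev_cmul cmul_assoc ..
  also have "\<dots> = scal (cmul (cmul (rev_mv B) C) (rev_mv A))" by (rule scal_comm)
  finally show ?thesis unfolding sprod_def cmul_assoc .
qed

definition wgt :: "4 set \<Rightarrow> real" where "wgt K = blade_sign K K * psg K K"

lemma wgt_nz: "wgt K \<noteq> 0"
  by (simp add: wgt_def blade_sign_alt psg_def EE_def eta_def)

lemma sprod_blade: "sprod G (blade K) = G $ K * wgt K"
proof -
  have "sprod G (blade K) = (\<Sum>I\<in>UNIV. (blade_sign I I * psg I I * G $ I) * (if I = K then 1 else 0))"
    unfolding sprod_alt blade_nth ..
  then show ?thesis by (simp only: sum_ind) (simp add: wgt_def)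
qed

lemma sprod_blade_blade: "sprod (blade K) (blade K) = wgt K"
  by (simp add: sprod_blade blade_nth)

abbreviation one_mv :: mv where "one_mv \<equiv> blade {}"

lemma blade_sign_empty_left[simp]: "blade_sign {} J = 1"
  by (simp add: blade_sign_def)
lemma blade_sign_empty_right[simp]: "blade_sign J {} = 1"
  by (simp add: blade_sign_def)

lemma cmul_one_bb: "cmul one_mv (blade K) = blade K"
  by (simp add: cmul_blade sd_def)
lemma cmul_bb_one: "cmul (blade K) one_mv = blade K"
  by (simp add: cmul_blade sd_def)

lemma cmul_one_left[simp]: "cmul one_mv X = X"
  by (subst cmul_expand_right) (simp add: cmul_one_bb flip: mv_expand)
lemma cmul_one_right[simp]: "cmul X one_mv = X"
  by (subst cmul_expand_left) (simp add: cmul_bb_one flip: mv_expand)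

lemma ninv_single: "ninv {a} {b} = (if b < a then 1 else 0)"
proof -
  have "{(i, j). i \<in> {a} \<and> j \<in> {b} \<and> j < i} = (if b < a then {(a, b)} else {})" by auto
  then show ?thesis unfolding ninv_def by simp
qed

lemma gen_sq: "cmul (gen a) (gen a) = eta a *\<^sub>R one_mv"
  by (simp add: gen_def cmul_blade blade_sign_alt psg_def ninv_single EE_def sd_def)

lemma gen_anti: "a \<noteq> b \<Longrightarrow> cmul (gen a) (gen b) = - cmul (gen b) (gen a)"
proof -
  assume ab: "a \<noteq> b"
  have s: "sd {a} {b} = sd {b} {a}" by (rule sd_comm)
  have "blade_sign {a} {b} = - blade_sign {b} {a}"
    using ab by (auto simp: blade_sign_alt psg_def ninv_single EE_def)
  then show ?thesis unfolding gen_def cmul_blade s by simp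
qed

definition gg :: "4 \<Rightarrow> 4 \<Rightarrow> real" where "gg a b = (if a = b then eta a else 0)"

lemma gen_swap: "cmul (gen a) (gen b) = (2 * gg a b) *\<^sub>R one_mv - cmul (gen b) (gen a)"
proof (cases "a = b")
  case True
  have gl: "(2 * c) *\<^sub>R X - c *\<^sub>R X = c *\<^sub>R X" for c and X :: "'a::real_vector"
    by (simp add: algebra_simps flip: scaleR_2)
  show ?thesis using True by (simp only: gen_sq gg_def simp_thms(6) if_True gl)
next
  case False then show ?thesis by (simp only: gen_anti[OF False] gg_def False if_False mult_zero_right scaleR_zero_left diff_0)
qed

lemma comm3: "cmul (gen a) (cmul (gen b) (gen c)) - cmul (cmul (gen b) (gen c)) (gen a)
   = (2 * gg a b) *\<^sub>R gen c - (2 * gg a c) *\<^sub>R gen b"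
proof -
  have "cmul (gen a) (cmul (gen b) (gen c)) = cmul (cmul (gen a) (gen b)) (gen c)"
    by (simp add: cmul_assoc)
  also have "\<dots> = (2 * gg a b) *\<^sub>R gen c - cmul (gen b) (cmul (gen a) (gen c))"
    by (subst gen_swap) (simp add: cmul_lin cmul_assoc)
  also have "\<dots> = (2 * gg a b) *\<^sub>R gen c - (2 * gg a c) *\<^sub>R gen b + cmul (cmul (gen b) (gen c)) (gen a)"
    by (subst gen_swap[of a c]) (simp add: cmul_lin cmul_assoc)
  finally show ?thesis by simp
qed

lemma half_lemma: fixes X Y :: "'a::real_vector" shows "(1/2) *\<^sub>R ((X - Y) - (Y - X)) = X - Y"
proof -
  have "(X - Y) - (Y - X) = 2 *\<^sub>R (X - Y)" by (simp add: scaleR_2)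
  then show ?thesis by simp
qed

lemma half_lemma2: fixes p q r s :: "'a::real_vector"
  shows "(1/2) *\<^sub>R (p - q) - (1/2) *\<^sub>R (r - s) = (1/2) *\<^sub>R ((p - r) - (q - s))"
  by (simp add: scaleR_diff_right)

lemma comm_wedge: "cmul (gen a) (wedge2 (gen b) (gen c)) - cmul (wedge2 (gen b) (gen c)) (gen a)
   = (2 * gg a b) *\<^sub>R gen c - (2 * gg a c) *\<^sub>R gen b"
proof -
  have "cmul (gen a) (wedge2 (gen b) (gen c)) - cmul (wedge2 (gen b) (gen c)) (gen a)
     = (1/2) *\<^sub>R ((cmul (gen a) (cmul (gen b) (gen c)) - cmul (cmul (gen b) (gen c)) (gen a))
        - (cmul (gen a) (cmul (gen c) (gen b)) - cmul (cmul (gen c) (gen b)) (gen a)))"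
    unfolding wedge2_def cmul_scaleR_left cmul_scaleR_right cmul_diff_left cmul_diff_right
    by (rule half_lemma2)
  also have "\<dots> = (2 * gg a b) *\<^sub>R gen c - (2 * gg a c) *\<^sub>R gen b"
    unfolding comm3 by (rule half_lemma)
  finally show ?thesis .
qed

lemma four_ne: "(0::4) \<noteq> 1" "(0::4) \<noteq> 2" "(1::4) \<noteq> 2" "(1::4) \<noteq> 0" "(2::4) \<noteq> 0" "(2::4) \<noteq> 1"
  by simp_all

lemma eta0: "eta 0 = 1" by (simp add: eta_def)

lemma rev_gen: "rev_mv (gen a) = gen a"
  by (simp add: gen_def rev_blade psg_def ninv_single)

lemma g12: "cmul (gen 1) (gen 2) = - cmul (gen 2) (gen 1)" by (rule gen_anti) simp
lemma g10: "cmul (gen 1) (gen 0) = - cmul (gen 0) (gen 1)" by (rule gen_anti) simp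
lemma g20: "cmul (gen 2) (gen 0) = - cmul (gen 0) (gen 2)" by (rule gen_anti) simp

lemma rev_gamma: "rev_mv gamma021 = - gamma021"
proof -
  have "rev_mv gamma021 = cmul (cmul (gen 1) (gen 2)) (gen 0)"
    unfolding gamma021_def rev_cmul rev_gen cmul_assoc ..
  also have "\<dots> = - cmul (gen 2) (cmul (gen 1) (gen 0))"
    unfolding g12 by (simp add: cmul_neg_left cmul_assoc)
  also have "\<dots> = cmul (cmul (gen 2) (gen 0)) (gen 1)"
    unfolding g10 by (simp add: cmul_neg_right cmul_assoc)
  also have "\<dots> = - gamma021"
    unfolding gamma021_def g20 by (simp add: cmul_neg_left)
  finally show ?thesis .
qed

lemma gamma_gen0: "cmul gamma021 (gen 0) = gamma21"
proof -
  have "cmul gamma021 (gen 0) = cmul (cmul (gen 0) (gen 2)) (cmul (gen 1) (gen 0))"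
    unfolding gamma021_def cmul_assoc ..
  also have "\<dots> = - cmul (gen 0) (cmul (cmul (gen 2) (gen 0)) (gen 1))"
    unfolding g10 by (simp add: cmul_neg_right cmul_assoc)
  also have "\<dots> = cmul (cmul (gen 0) (gen 0)) (cmul (gen 2) (gen 1))"
    unfolding g20 by (simp add: cmul_neg_right cmul_neg_left cmul_assoc)
  also have "\<dots> = gamma21"
    unfolding gamma21_def gen_sq eta0 by (simp add: cmul_lin)
  finally show ?thesis .
qed

lemma gen0_sq: "cmul (gen 0) (gen 0) = one_mv"
  by (simp add: gen_sq eta0)

definition odd_mv :: "mv \<Rightarrow> bool" where
  "odd_mv A \<longleftrightarrow> (\<forall>K. even (card K) \<longrightarrow> A $ K = 0)"

lemma card_sd: "card (sd I J) + 2 * card (I \<inter> J) = card I + card J"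
proof -
  have "card (sd I J) = card (I - J) + card (J - I)"
    unfolding sd_def by (rule card_Un_disjoint) auto
  moreover have "card I = card (I - J) + card (I \<inter> J)"
    using card_Diff_subset_Int[of I J] card_mono[of I "I \<inter> J"]
    by (metis Diff_Diff_Int Diff_subset card_Diff_subset card_mono finite inf.commute le_add_diff_inverse2 Int_lower1 add.commute)
  moreover have "card J = card (J - I) + card (I \<inter> J)"
    by (metis Diff_Diff_Int Diff_subset card_Diff_subset card_mono finite Int_commute le_add_diff_inverse2 add.commute Int_lower1)
  ultimately show ?thesis by simp
qed

lemma card_sd_parity: "even (card (sd I J)) \<longleftrightarrow> (even (card I) \<longleftrightarrow> even (card J))"
proof -
  have "even (card (sd I J) + 2 * card (I \<inter> J)) \<longleftrightarrow> even (card I + card J)"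
    by (simp only: card_sd)
  then show ?thesis by auto
qed

lemma cmul_comp_zero:
  assumes "\<And>I J. sd I J = K \<Longrightarrow> A $ I = 0 \<or> B $ J = 0"
  shows "cmul A B $ K = 0"
  unfolding cmul_nth
  by (rule sum.neutral, rule ballI, rule sum.neutral, rule ballI) (use assms in \<open>auto simp: of_bool_def\<close>)

lemma even_cmul_ee: "even_mv A \<Longrightarrow> even_mv B \<Longrightarrow> even_mv (cmul A B)"
  unfolding even_mv_def by (auto intro!: cmul_comp_zero dest!: card_sd_parity[THEN iffD1, rotated] simp: card_sd_parity)
lemma even_cmul_oo: "odd_mv A \<Longrightarrow> odd_mv B \<Longrightarrow> even_mv (cmul A B)"
  unfolding even_mv_def odd_mv_def by (auto intro!: cmul_comp_zero simp: card_sd_parity)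
lemma odd_cmul_eo: "even_mv A \<Longrightarrow> odd_mv B \<Longrightarrow> odd_mv (cmul A B)"
  unfolding even_mv_def odd_mv_def by (auto intro!: cmul_comp_zero simp: card_sd_parity)
lemma odd_cmul_oe: "odd_mv A \<Longrightarrow> even_mv B \<Longrightarrow> odd_mv (cmul A B)"
  unfolding even_mv_def odd_mv_def by (auto intro!: cmul_comp_zero simp: card_sd_parity)

lemma even_add: "even_mv A \<Longrightarrow> even_mv B \<Longrightarrow> even_mv (A + B)" unfolding even_mv_def by simp
lemma even_diff: "even_mv A \<Longrightarrow> even_mv B \<Longrightarrow> even_mv (A - B)" unfolding even_mv_def by simp
lemma even_scaleR: "even_mv A \<Longrightarrow> even_mv (c *\<^sub>R A)" unfolding even_mv_def by simp
lemma even_zero: "even_mv 0" unfolding even_mv_def by simp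
lemma even_sum: "(\<And>i. i \<in> S \<Longrightarrow> even_mv (f i)) \<Longrightarrow> even_mv (sum f S)"
  unfolding even_mv_def by (auto intro!: sum.neutral)
lemma odd_add: "odd_mv A \<Longrightarrow> odd_mv B \<Longrightarrow> odd_mv (A + B)" unfolding odd_mv_def by simp
lemma odd_diff: "odd_mv A \<Longrightarrow> odd_mv B \<Longrightarrow> odd_mv (A - B)" unfolding odd_mv_def by simp
lemma odd_scaleR: "odd_mv A \<Longrightarrow> odd_mv (c *\<^sub>R A)" unfolding odd_mv_def by simp
lemma odd_sum: "(\<And>i. i \<in> S \<Longrightarrow> odd_mv (f i)) \<Longrightarrow> odd_mv (sum f S)"
  unfolding odd_mv_def by (auto intro!: sum.neutral)

lemma odd_gen: "odd_mv (gen a)"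
  unfolding odd_mv_def gen_def blade_nth by auto
lemma odd_gen_low: "odd_mv (gen_low a)"
  unfolding gen_low_def by (intro odd_scaleR odd_gen)
lemma even_wedge: "odd_mv u \<Longrightarrow> odd_mv v \<Longrightarrow> even_mv (wedge2 u v)"
  unfolding wedge2_def by (intro even_scaleR even_diff even_cmul_oo)
lemma even_omega: "even_mv (omega_mv om x a)"
  unfolding omega_mv_def by (intro even_scaleR even_sum even_wedge odd_gen_low)
lemma odd_torsion: "odd_mv (torsion_cov h om x)"
  unfolding torsion_cov_def by (intro odd_sum odd_scaleR odd_gen)
lemma odd_gamma: "odd_mv gamma021"
  unfolding gamma021_def by (intro odd_cmul_eo even_cmul_oo odd_gen)

lemma wedge2_scale: "wedge2 (s *\<^sub>R u) (t *\<^sub>R v) = (s * t) *\<^sub>R wedge2 u v"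
  unfolding wedge2_def by (simp only: cmul_scaleR_left cmul_scaleR_right scaleR_scaleR scaleR_diff_right mult.commute[of t s]) (simp only: mult.commute)

lemma comm_low: "cmul (gen a) (wedge2 (gen_low b) (gen_low c)) - cmul (wedge2 (gen_low b) (gen_low c)) (gen a)
   = (eta b * eta c) *\<^sub>R ((2 * gg a b) *\<^sub>R gen c - (2 * gg a c) *\<^sub>R gen b)"
  unfolding gen_low_def wedge2_scale cmul_scaleR_left cmul_scaleR_right scaleR_diff_right[symmetric] comm_wedge ..

lemma sum_if_eq: "(\<Sum>b\<in>(UNIV::4 set). \<Sum>c\<in>(UNIV::4 set). (if b = a then X c else 0) *\<^sub>R (V c :: mv)) = (\<Sum>c\<in>UNIV. X c *\<^sub>R V c)"
proof -
  have "(\<Sum>b\<in>(UNIV::4 set). \<Sum>c\<in>(UNIV::4 set). (if b = a then X c else 0) *\<^sub>R V c) = (\<Sum>b\<in>(UNIV::4 set). if b = a then (\<Sum>c\<in>UNIV. X c *\<^sub>R V c) else 0)"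
    by (rule sum.cong) auto
  then show ?thesis by simp
qed

lemma sum_if_eq2: "(\<Sum>b\<in>(UNIV::4 set). \<Sum>c\<in>(UNIV::4 set). (if c = a then Y b else 0) *\<^sub>R (V b :: mv)) = (\<Sum>b\<in>UNIV. Y b *\<^sub>R V b)"
proof -
  have "(\<Sum>b\<in>(UNIV::4 set). \<Sum>c\<in>(UNIV::4 set). (if c = a then Y b else 0) *\<^sub>R V b) = (\<Sum>b\<in>(UNIV::4 set). Y b *\<^sub>R V b)"
    by (rule sum.cong) (auto simp: if_distrib[of "\<lambda>t. t *\<^sub>R V _"] cong: if_cong)
  then show ?thesis .
qed

lemma omega_comm_a:
  assumes anti: "\<And>b c. w b c = - w c b"
  shows "cmul (gen a) ((1/2) *\<^sub>R (\<Sum>b\<in>UNIV. \<Sum>c\<in>UNIV. w b c *\<^sub>R wedge2 (gen_low b) (gen_low c)))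
       - cmul ((1/2) *\<^sub>R (\<Sum>b\<in>UNIV. \<Sum>c\<in>UNIV. w b c *\<^sub>R wedge2 (gen_low b) (gen_low c))) (gen a)
     = 2 *\<^sub>R (\<Sum>c\<in>UNIV. (w a c * eta c) *\<^sub>R gen c)"
proof -
  let ?W = "\<lambda>b c. wedge2 (gen_low b) (gen_low c)"
  have "cmul (gen a) ((1/2) *\<^sub>R (\<Sum>b\<in>UNIV. \<Sum>c\<in>UNIV. w b c *\<^sub>R ?W b c))
       - cmul ((1/2) *\<^sub>R (\<Sum>b\<in>UNIV. \<Sum>c\<in>UNIV. w b c *\<^sub>R ?W b c)) (gen a)
     = (1/2) *\<^sub>R (\<Sum>b\<in>UNIV. \<Sum>c\<in>UNIV. w b c *\<^sub>R (cmul (gen a) (?W b c) - cmul (?W b c) (gen a)))"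
    by (simp only: cmul_scaleR_left cmul_scaleR_right cmul_sum_left cmul_sum_right
        scaleR_diff_right sum_subtractf)
  also have "\<dots> = (\<Sum>b\<in>UNIV. \<Sum>c\<in>UNIV. (w b c * eta b * eta c * gg a b) *\<^sub>R gen c)
       - (\<Sum>b\<in>UNIV. \<Sum>c\<in>UNIV. (w b c * eta b * eta c * gg a c) *\<^sub>R gen b)"
    unfolding comm_low
    by (simp only: scaleR_diff_right sum_subtractf scaleR_scaleR scaleR_sum_right)
       (simp add: ac_simps)
  also have "(\<Sum>b\<in>UNIV. \<Sum>c\<in>UNIV. (w b c * eta b * eta c * gg a b) *\<^sub>R gen c)
      = (\<Sum>b\<in>UNIV. \<Sum>c\<in>UNIV. (if b = a then w a c * eta c else 0) *\<^sub>R gen c)"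
    by (intro sum.cong refl) (auto simp: gg_def eta_def)
  also have "\<dots> = (\<Sum>c\<in>UNIV. (w a c * eta c) *\<^sub>R gen c)" by (rule sum_if_eq)
  also have "(\<Sum>b\<in>UNIV. \<Sum>c\<in>UNIV. (w b c * eta b * eta c * gg a c) *\<^sub>R gen b)
      = (\<Sum>b\<in>UNIV. \<Sum>c\<in>UNIV. (if c = a then - (w a b * eta b) else 0) *\<^sub>R gen b)"
    by (intro sum.cong refl) (auto simp: gg_def eta_def anti[of _ a])
  also have "\<dots> = (\<Sum>b\<in>UNIV. (- (w a b * eta b)) *\<^sub>R gen b)" by (rule sum_if_eq2)
  finally show ?thesis by (simp add: sum_negf scaleR_2)
qed

definition ev :: "mv \<Rightarrow> mv" where
  "ev G = (\<Sum>K\<in>{K. even (card K)}. G $ K *\<^sub>R blade K)"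

lemma ev_add: "ev (A + B) = ev A + ev B"
  unfolding ev_def by (simp add: scaleR_add_left sum.distrib)
lemma ev_scaleR: "ev (c *\<^sub>R A) = c *\<^sub>R ev A"
  unfolding ev_def by (simp add: scaleR_sum_right)
lemma linear_ev: "linear ev" by (rule linearI) (simp_all add: ev_add ev_scaleR)
lemma bounded_linear_ev: "bounded_linear ev"
  using linear_ev linear_conv_bounded_linear by blast
lemma ev_sum: "ev (sum f S) = (\<Sum>i\<in>S. ev (f i))"
  using linear_sum[OF linear_ev] by simp
lemma ev_diff: "ev (A - B) = ev A - ev B"
  using linear_diff[OF linear_ev] by simp
lemma ev_neg: "ev (- A) = - ev A"
  using linear_neg[OF linear_ev] by simp
lemma ev_zero[simp]: "ev 0 = 0"
  using linear_0[OF linear_ev] by simp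

lemma ev_even: assumes "even_mv G" shows "ev G = G"
proof -
  have "G = (\<Sum>K\<in>UNIV. G $ K *\<^sub>R blade K)" by (rule mv_expand)
  also have "\<dots> = (\<Sum>K\<in>{K. even (card K)}. G $ K *\<^sub>R blade K)"
    using assms unfolding even_mv_def by (intro sum.mono_neutral_right) auto
  finally show ?thesis unfolding ev_def by simp
qed

lemma mvd:
  assumes "\<And>K. ((\<lambda>t. f (P + t *\<^sub>R blade K)) has_real_derivative sprod G (blade K)) (at 0)"
  shows "mvderiv_even f P = ev G"
  unfolding mvderiv_even_def ev_def
proof (rule sum.cong[OF refl])
  fix K
  have "deriv (\<lambda>t. f (P + t *\<^sub>R blade K)) 0 = G $ K * wgt K"
    using DERIV_imp_deriv[OF assms[of K]] by (simp add: sprod_blade)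
  then show "deriv (\<lambda>t. f (P + t *\<^sub>R blade K)) 0 *\<^sub>R recip_blade K = G $ K *\<^sub>R blade K"
    unfolding recip_blade_def sprod_blade_blade using wgt_nz[of K] by simp
qed

lemma rev_gen_low: "rev_mv (gen_low a) = gen_low a"
  unfolding gen_low_def by (simp add: rev_scaleR rev_gen)

lemma rev_wedge: "rev_mv u = u \<Longrightarrow> rev_mv v = v \<Longrightarrow> rev_mv (wedge2 u v) = - wedge2 u v"
  unfolding wedge2_def by (simp add: rev_scaleR rev_diff rev_cmul scaleR_diff_right)

lemma rev_omega: "rev_mv (omega_mv om y a) = - omega_mv om y a"
  unfolding omega_mv_def
  by (simp add: rev_scaleR rev_sum rev_wedge rev_gen_low scaleR_sum_right sum_negf)

lemma sprod_neg_left: "sprod (- A) B = - sprod A B"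
  using sprod_scaleR_left[of "-1" A B] by simp
lemma sprod_neg_right: "sprod A (- B) = - sprod A B"
  using sprod_scaleR_right[of A "-1" B] by simp

definition D1 :: "(real^4 \<Rightarrow> 4 \<Rightarrow> 4 \<Rightarrow> 4 \<Rightarrow> real) \<Rightarrow> real^4 \<Rightarrow> mv \<Rightarrow> mv \<Rightarrow> mv" where
  "D1 om y b G = (\<Sum>a\<in>UNIV. cmul (cmul (gen a) ((1/2) *\<^sub>R cmul (omega_mv om y a) b)) G)"

lemma dirac_shiftP:
  "dirac_op h om y (P + t *\<^sub>R b) Q G = dirac_op h om y P Q G + t *\<^sub>R D1 om y b G"
  unfolding dirac_op_def spin_cov_def D1_def
  by (simp add: cmul_lin scaleR_add_right sum.distrib scaleR_sum_right add.assoc)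

lemma lagr_polyP:
  "lagr h om m y (P + t *\<^sub>R b) Q = vol h y * ((sprod (dirac_op h om y P Q gamma021) P - m * sprod P P)
     + t * (sprod (dirac_op h om y P Q gamma021) b + sprod (D1 om y b gamma021) P - 2 * m * sprod P b)
     + t^2 * (sprod (D1 om y b gamma021) b - m * sprod b b))"
  unfolding lagr_def dirac_shiftP
  by (simp add: sprod_add_left sprod_add_right sprod_scaleR_left sprod_scaleR_right sprod_comm[of b P]
      algebra_simps power2_eq_square)

lemma lagr_dP:
  "((\<lambda>t. lagr h om m y (P + t *\<^sub>R b) Q) has_real_derivative
     vol h y * (sprod (dirac_op h om y P Q gamma021) b + sprod (D1 om y b gamma021) P - 2 * m * sprod P b)) (at 0)"
  unfolding lagr_polyP
  by (auto intro!: derivative_eq_intros)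

definition G1 :: "(real^4 \<Rightarrow> 4 \<Rightarrow> 4 \<Rightarrow> 4 \<Rightarrow> real) \<Rightarrow> real^4 \<Rightarrow> mv \<Rightarrow> mv" where
  "G1 om y P = (1/2) *\<^sub>R (\<Sum>a\<in>UNIV. cmul (cmul (omega_mv om y a) (gen a)) (cmul P gamma021))"

lemma D1_adj: "sprod (D1 om y b gamma021) P = sprod b (G1 om y P)"
proof -
  have fa: "sprod (cmul (cmul (gen a) ((1/2) *\<^sub>R cmul (omega_mv om y a) b)) gamma021) P
      = (1/2) * sprod b (cmul (cmul (omega_mv om y a) (gen a)) (cmul P gamma021))" for a
  proof -
    have e1: "cmul (cmul (gen a) ((1/2) *\<^sub>R cmul (omega_mv om y a) b)) gamma021
        = (1/2) *\<^sub>R cmul (cmul (cmul (gen a) (omega_mv om y a)) b) gamma021"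
      by (simp only: cmul_scaleR_right cmul_scaleR_left cmul_assoc)
    have e2: "sprod (cmul (cmul (cmul (gen a) (omega_mv om y a)) b) gamma021) P
        = sprod b (cmul (rev_mv (cmul (gen a) (omega_mv om y a))) (cmul P (rev_mv gamma021)))"
      by (simp only: sprod_adj_right[of "cmul (cmul (gen a) (omega_mv om y a)) b" gamma021 P]
          sprod_adj_left[of "cmul (gen a) (omega_mv om y a)" b])
    have e3: "cmul (rev_mv (cmul (gen a) (omega_mv om y a))) (cmul P (rev_mv gamma021))
        = cmul (cmul (omega_mv om y a) (gen a)) (cmul P gamma021)"
      by (simp only: rev_cmul rev_gen rev_omega rev_gamma cmul_neg_left cmul_neg_right minus_minus)
    show ?thesis unfolding e1 sprod_scaleR_left e2 e3 ..
  qed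
  have "sprod (D1 om y b gamma021) P = (\<Sum>a\<in>UNIV. (1/2) * sprod b (cmul (cmul (omega_mv om y a) (gen a)) (cmul P gamma021)))"
    unfolding D1_def sprod_sum_left by (rule sum.cong[OF refl]) (rule fa)
  also have "\<dots> = sprod b (G1 om y P)"
    by (simp only: G1_def sprod_scaleR_right sprod_sum_right sum_distrib_left)
  finally show ?thesis .
qed

lemma mvd_P:
  "mvderiv_even (\<lambda>P'. lagr h om m y P' Q) P
     = ev (vol h y *\<^sub>R (dirac_op h om y P Q gamma021 + G1 om y P - (2 * m) *\<^sub>R P))"
proof (rule mvd)
  fix K
  show "((\<lambda>t. lagr h om m y (P + t *\<^sub>R blade K) Q) has_real_derivative
     sprod (vol h y *\<^sub>R (dirac_op h om y P Q gamma021 + G1 om y P - (2 * m) *\<^sub>R P)) (blade K)) (at 0)"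
    using lagr_dP[of h om m y P "blade K" Q]
    by (simp add: D1_adj sprod_add_left sprod_diff_left sprod_scaleR_left sprod_comm[of "blade K"] algebra_simps)
qed

lemma sum_upd_shift:
  fixes \<mu> :: 4
  shows "(\<Sum>\<nu>\<in>UNIV. c \<nu> *\<^sub>R (f(\<mu> := z + w)) \<nu>) = (\<Sum>\<nu>\<in>UNIV. c \<nu> *\<^sub>R (f(\<mu> := z)) \<nu>) + c \<mu> *\<^sub>R (w::mv)"
proof -
  have "(\<Sum>\<nu>\<in>UNIV. c \<nu> *\<^sub>R (f(\<mu> := z + w)) \<nu>) = (\<Sum>\<nu>\<in>UNIV. c \<nu> *\<^sub>R (f(\<mu> := z)) \<nu> + (if \<nu> = \<mu> then c \<nu> *\<^sub>R w else 0))"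
    by (rule sum.cong) (auto simp: scaleR_add_right)
  then show ?thesis by (simp add: sum.distrib sum.delta)
qed

definition D2 :: "(real^4 \<Rightarrow> real^4^4) \<Rightarrow> real^4 \<Rightarrow> 4 \<Rightarrow> mv \<Rightarrow> mv" where
  "D2 h y \<mu> b = (\<Sum>a\<in>UNIV. hinv h y $ \<mu> $ a *\<^sub>R cmul (cmul (gen a) b) gamma021)"

lemma dirac_shiftQ:
  "dirac_op h om y P (Q(\<mu> := R + t *\<^sub>R b)) gamma021 = dirac_op h om y P (Q(\<mu> := R)) gamma021 + t *\<^sub>R D2 h y \<mu> b"
  unfolding dirac_op_def spin_cov_def D2_def sum_upd_shift
  by (simp add: cmul_lin scaleR_add_right sum.distrib scaleR_sum_right algebra_simps)

lemma lagr_dQ: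
  "((\<lambda>t. lagr h om m y P (Q(\<mu> := R + t *\<^sub>R b))) has_real_derivative
     vol h y * sprod (D2 h y \<mu> b) P) (at 0)"
proof -
  have e: "(\<lambda>t. lagr h om m y P (Q(\<mu> := R + t *\<^sub>R b))) = (\<lambda>t. vol h y * ((sprod (dirac_op h om y P (Q(\<mu> := R)) gamma021) P - m * sprod P P) + t * sprod (D2 h y \<mu> b) P))"
    unfolding lagr_def dirac_shiftQ by (simp add: sprod_add_left sprod_scaleR_left algebra_simps)
  show ?thesis unfolding e by (auto intro!: derivative_eq_intros)
qed

lemma D2_adj: "sprod (D2 h y \<mu> b) P = - sprod (\<Sum>a\<in>UNIV. hinv h y $ \<mu> $ a *\<^sub>R cmul (cmul (gen a) P) gamma021) b"
proof -
  have "sprod (cmul (cmul (gen a) b) gamma021) P = - sprod (cmul (cmul (gen a) P) gamma021) b" for a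
  proof -
    have "sprod (cmul (cmul (gen a) b) gamma021) P = sprod b (cmul (rev_mv (gen a)) (cmul P (rev_mv gamma021)))"
      by (simp only: sprod_adj_right[of "cmul (gen a) b" gamma021 P] sprod_adj_left[of "gen a" b])
    also have "\<dots> = - sprod b (cmul (cmul (gen a) P) gamma021)"
      by (simp only: rev_gen rev_gamma cmul_neg_right sprod_neg_right cmul_assoc)
    finally show ?thesis by (simp only: sprod_comm[of b])
  qed
  then show ?thesis unfolding D2_def
    by (simp add: sprod_sum_left sprod_scaleR_left sum_negf)
qed

lemma mvd_Q:
  "mvderiv_even (\<lambda>R. lagr h om m y P (Q(\<mu> := R))) R0
     = ev (- (vol h y *\<^sub>R (\<Sum>a\<in>UNIV. hinv h y $ \<mu> $ a *\<^sub>R cmul (cmul (gen a) P) gamma021)))"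
proof (rule mvd)
  fix K
  show "((\<lambda>t. lagr h om m y P (Q(\<mu> := R0 + t *\<^sub>R blade K))) has_real_derivative
     sprod (- (vol h y *\<^sub>R (\<Sum>a\<in>UNIV. hinv h y $ \<mu> $ a *\<^sub>R cmul (cmul (gen a) P) gamma021))) (blade K)) (at 0)"
    using lagr_dQ[of h om m y P Q \<mu> R0 "blade K"]
    unfolding D2_adj by (simp only: sprod_neg_left sprod_scaleR_left mult_minus_right)
qed

lemma matrix_inv_props:
  fixes A :: "real^'n::finite^'n"
  assumes "invertible A"
  shows "A ** matrix_inv A = mat 1" "matrix_inv A ** A = mat 1"
proof -
  have "\<exists>A'. A ** A' = mat 1 \<and> A' ** A = mat 1" using assms unfolding invertible_def by blast
  then have "A ** matrix_inv A = mat 1 \<and> matrix_inv A ** A = mat 1"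
    unfolding matrix_inv_def by (rule someI_ex)
  then show "A ** matrix_inv A = mat 1" "matrix_inv A ** A = mat 1" by auto
qed

lemma if01_mult: "(if P then 1 else 0) * (x::real) = (if P then x else 0)" by simp

lemma det_row_replace_id:
  fixes c :: "real^'n::finite"
  shows "det (\<chi> j. if j = i then c else axis j 1 :: real^'n^'n) = c $ i"
proof -
  have "det (\<chi> j. if j = i then c else axis j 1 :: real^'n^'n)
      = det (\<chi> j. if j = i then (\<Sum>k\<in>UNIV. c $ k *s axis k 1) else axis j 1 :: real^'n^'n)"
    by (simp only: basis_expansion)
  also have "\<dots> = (\<Sum>k\<in>UNIV. det (\<chi> j. if j = i then c $ k *s axis k 1 else axis j 1 :: real^'n^'n))"
    by (rule det_linear_row_sum) simp
  also have "\<dots> = (\<Sum>k\<in>UNIV. c $ k * det (\<chi> j. if j = i then axis k 1 else axis j 1 :: real^'n^'n))"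
    by (simp only: det_row_mul)
  also have "\<dots> = (\<Sum>k\<in>UNIV. if k = i then c $ k else 0)"
  proof (rule sum.cong[OF refl])
    fix k
    show "c $ k * det (\<chi> j. if j = i then axis k 1 else axis j 1 :: real^'n^'n) = (if k = i then c $ k else 0)"
    proof (cases "k = i")
      case True
      have "(\<chi> j. if j = i then axis k 1 else axis j 1 :: real^'n^'n) = mat 1"
        using True by (auto simp: vec_eq_iff mat_def axis_def)
      then show ?thesis using True by simp
    next
      case False
      have "det (\<chi> j. if j = i then axis k 1 else axis j 1 :: real^'n^'n) = 0"
        by (rule det_identical_rows[OF False[symmetric]]) (use False in \<open>simp add: row_def\<close>)
      then show ?thesis using False by simp
    qed
  qed
  also have "\<dots> = c $ i" by simp
  finally show ?thesis .
qed

lemma det_row_replace: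
  fixes A :: "real^'n::finite^'n"
  assumes inv: "invertible A"
  shows "det (\<chi> j. if j = i then r else A $ j) = det A * (\<Sum>\<nu>\<in>UNIV. r $ \<nu> * matrix_inv A $ \<nu> $ i)"
proof -
  let ?B = "matrix_inv A"
  let ?c = "r v* ?B"
  let ?E = "(\<chi> j. if j = i then ?c else axis j 1) :: real^'n^'n"
  have BA: "?B ** A = mat 1" using matrix_inv_props[OF inv] by simp
  have cA: "?c v* A = r" using BA by (simp add: vector_matrix_mul_assoc)
  have "(\<chi> j. if j = i then r else A $ j) = ?E ** A"
  proof -
    have "(?E ** A) $ j $ k = (if j = i then r else A $ j) $ k" for j k
    proof (cases "j = i")
      case True
      have "(?E ** A) $ j $ k = (?c v* A) $ k"
        using True by (simp add: matrix_matrix_mult_def vector_matrix_mult_def)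
      then show ?thesis using True cA by simp
    next
      case False
      have "(?E ** A) $ j $ k = (\<Sum>l\<in>UNIV. (if l = j then A $ l $ k else 0))"
        using False by (simp add: matrix_matrix_mult_def axis_def if01_mult)
      then show ?thesis using False by simp
    qed
    then show ?thesis by (simp add: vec_eq_iff)
  qed
  then have "det (\<chi> j. if j = i then r else A $ j) = det ?E * det A" by (simp add: det_mul)
  also have "det ?E = ?c $ i" by (rule det_row_replace_id)
  finally show ?thesis by (simp add: vector_matrix_mult_def mult.commute)
qed

lemma matrix_inv_cramer:
  fixes A :: "real^'n::finite^'n"
  assumes inv: "invertible A"
  shows "matrix_inv A $ \<nu> $ i = det (\<chi> j. if j = i then axis \<nu> 1 else A $ j) / det A"
proof -
  have d: "det A \<noteq> 0" using inv invertible_det_nz by blast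
  have "det (\<chi> j. if j = i then axis \<nu> 1 else A $ j) = det A * matrix_inv A $ \<nu> $ i"
    unfolding det_row_replace[OF inv] by (simp add: axis_def if01_mult)
  then show ?thesis using d by simp
qed

lemma prod_eta: "(\<Prod>k\<in>UNIV. eta k) = -1"
proof -
  have "(\<Prod>k\<in>UNIV. eta k) = eta 0 * (\<Prod>k\<in>UNIV - {0}. eta k)"
    by (simp add: prod.remove)
  also have "(\<Prod>k\<in>UNIV - {0}. eta k) = (\<Prod>k\<in>UNIV - {0::4}. -1)"
    by (rule prod.cong) (auto simp: eta_def)
  also have "\<dots> = (-1) ^ card (UNIV - {0::4})" by simp
  also have "card (UNIV - {0::4}) = 3" by (simp add: card_Diff_singleton)
  finally show ?thesis by (simp add: eta_def)
qed

lemma det_gmat: "det (gmat h y) = - (det (h y) * det (h y))"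
proof -
  let ?D = "(\<chi> i j. if i = j then eta i else 0) :: real^4^4"
  have "gmat h y = transpose (h y) ** ?D ** h y"
    by (simp add: vec_eq_iff gmat_def matrix_matrix_mult_def transpose_def if_distrib sum_distrib_right
        sum.delta cong: if_cong) (simp add: ac_simps)
  moreover have "det ?D = -1"
    by (subst det_diagonal) (simp_all add: prod_eta)
  ultimately show ?thesis by (simp add: det_mul power2_eq_square)
qed

lemma vol_abs: "vol h y = \<bar>det (h y)\<bar>"
  unfolding vol_def det_gmat by simp

lemma comp_deriv:
  fixes M :: "'a::real_normed_vector \<Rightarrow> real^'n::finite^'m::finite"
  assumes "(M has_derivative M') F"
  shows "((\<lambda>y. M y $ i $ j) has_derivative (\<lambda>v. M' v $ i $ j)) F"
  using bounded_linear.has_derivative[OF bounded_linear_vec_nth,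
      OF bounded_linear.has_derivative[OF bounded_linear_vec_nth assms]] .

lemma has_derivative_det_comp:
  fixes M :: "'a::real_normed_vector \<Rightarrow> real^'n::finite^'n"
  assumes "\<And>i j. ((\<lambda>y. M y $ i $ j) has_derivative D i j) (at x)"
  shows "((\<lambda>y. det (M y)) has_derivative
     (\<lambda>v. \<Sum>p\<in>{p. p permutes UNIV}. of_int (sign p) * (\<Sum>i\<in>UNIV. D i (p i) v * (\<Prod>j\<in>UNIV - {i}. M x $ j $ p j)))) (at x)"
  unfolding det_def
  by (rule has_derivative_eq_rhs, (rule derivative_intros assms)+) (simp add: fun_eq_iff)

lemma det_deriv_form:
  fixes A B :: "real^'n::finite^'n"
  shows "(\<Sum>p\<in>{p. p permutes UNIV}. of_int (sign p) * (\<Sum>i\<in>UNIV. B $ i $ p i * (\<Prod>j\<in>UNIV - {i}. A $ j $ p j)))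
       = (\<Sum>i\<in>UNIV. det (\<chi> j. if j = i then B $ i else A $ j))"
proof -
  have e: "(\<Prod>j\<in>UNIV. (\<chi> j. if j = i then B $ i else A $ j) $ j $ p j) = B $ i $ p i * (\<Prod>j\<in>UNIV - {i}. A $ j $ p j)" for i p
  proof -
    have "(\<Prod>j\<in>UNIV. (\<chi> j. if j = i then B $ i else A $ j) $ j $ p j)
        = (\<chi> j. if j = i then B $ i else A $ j) $ i $ p i * (\<Prod>j\<in>UNIV - {i}. (\<chi> j. if j = i then B $ i else A $ j) $ j $ p j)"
      by (rule prod.remove) simp_all
    also have "(\<Prod>j\<in>UNIV - {i}. (\<chi> j. if j = i then B $ i else A $ j) $ j $ p j) = (\<Prod>j\<in>UNIV - {i}. A $ j $ p j)"
      by (rule prod.cong) auto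
    finally show ?thesis by simp
  qed
  show ?thesis unfolding det_def e
    by (simp add: sum_distrib_left) (rule sum.swap)
qed

lemma has_derivative_det:
  fixes M :: "'a::real_normed_vector \<Rightarrow> real^'n::finite^'n"
  assumes "(M has_derivative M') (at x)"
  shows "((\<lambda>y. det (M y)) has_derivative (\<lambda>v. \<Sum>i\<in>UNIV. det (\<chi> j. if j = i then M' v $ i else M x $ j))) (at x)"
  using has_derivative_det_comp[of M "\<lambda>i j v. M' v $ i $ j" x, OF comp_deriv[OF assms]]
  unfolding det_deriv_form .

lemma jacobi:
  fixes A B :: "real^'n::finite^'n"
  assumes "invertible A"
  shows "(\<Sum>i\<in>UNIV. det (\<chi> j. if j = i then B $ i else A $ j)) = det A * (\<Sum>i\<in>UNIV. \<Sum>\<nu>\<in>UNIV. B $ i $ \<nu> * matrix_inv A $ \<nu> $ i)"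
  unfolding det_row_replace[OF assms] by (simp add: sum_distrib_left)

lemma hinv_comp_deriv:
  assumes U: "open U" "x \<in> U" and inv: "\<And>y. y \<in> U \<Longrightarrow> invertible (h y)"
    and hd: "(h has_derivative h') (at x)"
  shows "\<exists>D. ((\<lambda>y. hinv h y $ \<nu> $ i) has_derivative D) (at x)"
proof -
  let ?N = "\<lambda>y. (\<chi> j. if j = i then axis \<nu> 1 else h y $ j) :: real^4^4"
  have cN: "((\<lambda>y. ?N y $ j $ k) has_derivative (if j = i then (\<lambda>v. 0) else (\<lambda>v. h' v $ j $ k))) (at x)" for j k
    using comp_deriv[OF hd, of j k] by auto
  obtain DN where DN: "((\<lambda>y. det (?N y)) has_derivative DN) (at x)"
    using has_derivative_det_comp[of ?N _ x, OF cN] by blast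
  obtain Dh where Dh: "((\<lambda>y. det (h y)) has_derivative Dh) (at x)"
    using has_derivative_det[OF hd] by blast
  have nz: "det (h x) \<noteq> 0" using inv[OF U(2)] invertible_det_nz by blast
  obtain D where D: "((\<lambda>y. det (?N y) / det (h y)) has_derivative D) (at x)"
    using has_derivative_divide[OF DN Dh nz] by blast
  have e: "\<And>y. y \<in> U \<Longrightarrow> det (?N y) / det (h y) = hinv h y $ \<nu> $ i"
    unfolding hinv_def by (simp add: matrix_inv_cramer[OF inv])
  show ?thesis by (rule exI, rule has_derivative_transform_within_open[OF D U], rule e)
qed

lemma pd_eq: "(f has_derivative f') (at x) \<Longrightarrow> pd \<mu> f x = f' (axis \<mu> 1)"
  unfolding pd_def using frechet_derivative_at by metis

lemma vol_deriv:
  assumes inv: "invertible (h x)" and hd: "(h has_derivative h') (at x)"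
  shows "((vol h) has_derivative (\<lambda>v. vol h x * (\<Sum>i\<in>UNIV. \<Sum>\<nu>\<in>UNIV. h' v $ i $ \<nu> * hinv h x $ \<nu> $ i))) (at x)"
proof -
  let ?d = "det (h x)"
  have nz: "?d \<noteq> 0" using inv invertible_det_nz by blast
  have dd: "((\<lambda>y. det (h y)) has_derivative (\<lambda>v. ?d * (\<Sum>i\<in>UNIV. \<Sum>\<nu>\<in>UNIV. h' v $ i $ \<nu> * hinv h x $ \<nu> $ i))) (at x)"
    using has_derivative_det[OF hd] unfolding jacobi[OF inv] hinv_def .
  have e: "vol h = (\<lambda>y. sqrt (det (h y) * det (h y)))"
    by (simp add: fun_eq_iff vol_abs real_sqrt_abs2 flip: abs_mult)
  have pos: "0 < ?d * ?d" using nz not_real_square_gt_zero by blast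
  show ?thesis unfolding e
    apply (rule has_derivative_eq_rhs)
     apply (rule has_derivative_real_sqrt[where g="\<lambda>y. det (h y) * det (h y)", OF pos])
     apply (rule has_derivative_mult[OF dd dd])
    using nz by (auto simp: fun_eq_iff real_sqrt_abs2 field_simps abs_mult_self_eq divide_simps)
qed

lemma Xid:
  assumes anti: "\<And>a b c. om x a b c = - om x a c b"
  shows "(\<Sum>a\<in>UNIV. (- (\<Sum>b\<in>UNIV. cstr h x a b b)) *\<^sub>R gen a)
     = (1/2) *\<^sub>R (\<Sum>a\<in>UNIV. cmul (gen a) (omega_mv om x a) - cmul (omega_mv om x a) (gen a)) + torsion_cov h om x"
proof -
  have c: "cmul (gen a) (omega_mv om x a) - cmul (omega_mv om x a) (gen a) = 2 *\<^sub>R (\<Sum>c\<in>UNIV. (om x a a c * eta c) *\<^sub>R gen c)" for a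
    unfolding omega_mv_def by (rule omega_comm_a) (rule anti)
  have z: "om x a b b = 0" for a b using anti[of a b b] by simp
  have "(1/2) *\<^sub>R (\<Sum>a\<in>UNIV. cmul (gen a) (omega_mv om x a) - cmul (omega_mv om x a) (gen a))
      = (\<Sum>a\<in>UNIV. \<Sum>c\<in>UNIV. (om x a a c * eta c) *\<^sub>R gen c)"
    unfolding c by (simp add: scaleR_sum_right)
  also have "\<dots> = (\<Sum>c\<in>UNIV. (\<Sum>a\<in>UNIV. om x a a c * eta c) *\<^sub>R gen c)"
    by (subst sum.swap) (simp add: scaleR_sum_left)
  finally have A: "(1/2) *\<^sub>R (\<Sum>a\<in>UNIV. cmul (gen a) (omega_mv om x a) - cmul (omega_mv om x a) (gen a))
      = (\<Sum>c\<in>UNIV. (\<Sum>a\<in>UNIV. om x a a c * eta c) *\<^sub>R gen c)" .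
  have B: "torsion_cov h om x = (\<Sum>a\<in>UNIV. (- (\<Sum>b\<in>UNIV. om x b b a * eta a) - (\<Sum>b\<in>UNIV. cstr h x a b b)) *\<^sub>R gen a)"
    unfolding torsion_cov_def torsion_def conn_coef_def
    by (intro sum.cong refl arg_cong2[where f=scaleR]) (simp add: z sum_subtractf sum_negf ac_simps)
  show ?thesis unfolding A B
    by (simp add: sum.distrib[symmetric] scaleR_add_left[symmetric])
qed

definition Zop :: "4 \<Rightarrow> mv \<Rightarrow> mv" where "Zop a P = cmul (cmul (gen a) P) gamma021"

lemma Zop_lin: "Zop a (A + B) = Zop a A + Zop a B" "Zop a (c *\<^sub>R A) = c *\<^sub>R Zop a A"
  "Zop a (sum f S) = (\<Sum>i\<in>S. Zop a (f i))"
  unfolding Zop_def by (simp_all add: cmul_lin)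

lemma linear_Zop: "linear (Zop a)" by (rule linearI) (simp_all add: Zop_lin)
lemma bounded_linear_Zop: "bounded_linear (Zop a)"
  using linear_Zop linear_conv_bounded_linear by blast

lemma fin_vec: fixes A B C Tt P :: "'a::real_vector"
  shows "v *\<^sub>R (A + B + C - (2 * m) *\<^sub>R P) + (v *\<^sub>R A + v *\<^sub>R (B - C + Tt))
     = (2 * v) *\<^sub>R (A + B + (1/2) *\<^sub>R Tt - m *\<^sub>R P)"
  by (simp add: algebra_simps flip: scaleR_2)

lemma final_comb:
  assumes anti: "\<And>a b c. om x a b c = - om x a c b"
    and divsum: "\<And>a. (\<Sum>\<mu>\<in>UNIV. vd \<mu> * hinv h x $ \<mu> $ a + v * Hd \<mu> a) = v * (- (\<Sum>b\<in>UNIV. cstr h x a b b))"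
  shows "v *\<^sub>R (dirac_op h om x P Q gamma021 + G1 om x P - (2 * m) *\<^sub>R P)
    + (\<Sum>\<mu>\<in>UNIV. v *\<^sub>R (\<Sum>a\<in>UNIV. hinv h x $ \<mu> $ a *\<^sub>R Zop a (Q \<mu>) + Hd \<mu> a *\<^sub>R Zop a P)
         + vd \<mu> *\<^sub>R (\<Sum>a\<in>UNIV. hinv h x $ \<mu> $ a *\<^sub>R Zop a P))
   = (2 * v) *\<^sub>R (dirac_op h om x P Q gamma021 + (1/2) *\<^sub>R cmul (cmul (torsion_cov h om x) P) gamma021 - m *\<^sub>R P)"
proof -
  define Xc where "Xc X = cmul (cmul X P) gamma021" for X
  have Xc_lin: "Xc (X + Y) = Xc X + Xc Y" "Xc (c *\<^sub>R X) = c *\<^sub>R Xc X" "Xc (X - Y) = Xc X - Xc Y"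
     "Xc (sum f S) = (\<Sum>i\<in>S. Xc (f i))" for X Y c f S
    unfolding Xc_def by (simp_all add: cmul_lin)
  define S where "S a = (\<Sum>\<mu>\<in>UNIV. hinv h x $ \<mu> $ a *\<^sub>R Q \<mu>)" for a
  let ?A = "\<Sum>a\<in>UNIV. Zop a (S a)"
  let ?B = "Xc ((1/2) *\<^sub>R (\<Sum>a\<in>UNIV. cmul (gen a) (omega_mv om x a)))"
  let ?C = "Xc ((1/2) *\<^sub>R (\<Sum>a\<in>UNIV. cmul (omega_mv om x a) (gen a)))"
  let ?T = "Xc (torsion_cov h om x)"
  have a: "dirac_op h om x P Q gamma021 = ?A + ?B"
    unfolding dirac_op_def spin_cov_def S_def Zop_def Xc_def
    by (simp add: cmul_lin sum.distrib cmul_assoc scaleR_sum_right)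
  have b: "G1 om x P = ?C"
    unfolding G1_def Xc_def by (simp add: cmul_lin cmul_assoc scaleR_sum_right)
  have c: "(\<Sum>\<mu>\<in>UNIV. \<Sum>a\<in>UNIV. hinv h x $ \<mu> $ a *\<^sub>R Zop a (Q \<mu>)) = ?A"
    unfolding S_def Zop_lin by (subst sum.swap) (simp add: Zop_lin)
  have d: "(\<Sum>\<mu>\<in>UNIV. v *\<^sub>R (\<Sum>a\<in>UNIV. Hd \<mu> a *\<^sub>R Zop a P) + vd \<mu> *\<^sub>R (\<Sum>a\<in>UNIV. hinv h x $ \<mu> $ a *\<^sub>R Zop a P))
      = (\<Sum>a\<in>UNIV. (\<Sum>\<mu>\<in>UNIV. vd \<mu> * hinv h x $ \<mu> $ a + v * Hd \<mu> a) *\<^sub>R Zop a P)"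
    by (simp add: scaleR_sum_right scaleR_sum_left sum.distrib scaleR_add_left ac_simps) (rule arg_cong2[where f="(+)"]; rule sum.swap)
  have e: "(\<Sum>a\<in>UNIV. (\<Sum>\<mu>\<in>UNIV. vd \<mu> * hinv h x $ \<mu> $ a + v * Hd \<mu> a) *\<^sub>R Zop a P)
      = v *\<^sub>R Xc (\<Sum>a\<in>UNIV. (- (\<Sum>b\<in>UNIV. cstr h x a b b)) *\<^sub>R gen a)"
    unfolding divsum Xc_lin scaleR_sum_right Zop_def Xc_def by (simp add: cmul_lin scaleR_sum_right)
  have f: "Xc (\<Sum>a\<in>UNIV. (- (\<Sum>b\<in>UNIV. cstr h x a b b)) *\<^sub>R gen a) = ?B - ?C + ?T"
    unfolding Xid[where om=om and x=x and h=h, OF anti] Xc_lin scaleR_diff_right sum_subtractf ..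
  have L: "(\<Sum>\<mu>\<in>UNIV. v *\<^sub>R (\<Sum>a\<in>UNIV. hinv h x $ \<mu> $ a *\<^sub>R Zop a (Q \<mu>) + Hd \<mu> a *\<^sub>R Zop a P)
         + vd \<mu> *\<^sub>R (\<Sum>a\<in>UNIV. hinv h x $ \<mu> $ a *\<^sub>R Zop a P))
      = v *\<^sub>R ?A + v *\<^sub>R (?B - ?C + ?T)"
  proof -
    have "(\<Sum>\<mu>\<in>UNIV. v *\<^sub>R (\<Sum>a\<in>UNIV. hinv h x $ \<mu> $ a *\<^sub>R Zop a (Q \<mu>) + Hd \<mu> a *\<^sub>R Zop a P)
         + vd \<mu> *\<^sub>R (\<Sum>a\<in>UNIV. hinv h x $ \<mu> $ a *\<^sub>R Zop a P))
      = v *\<^sub>R (\<Sum>\<mu>\<in>UNIV. \<Sum>a\<in>UNIV. hinv h x $ \<mu> $ a *\<^sub>R Zop a (Q \<mu>))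
        + (\<Sum>\<mu>\<in>UNIV. v *\<^sub>R (\<Sum>a\<in>UNIV. Hd \<mu> a *\<^sub>R Zop a P) + vd \<mu> *\<^sub>R (\<Sum>a\<in>UNIV. hinv h x $ \<mu> $ a *\<^sub>R Zop a P))"
      by (simp add: sum.distrib scaleR_add_right scaleR_sum_right add.assoc)
    then show ?thesis unfolding c d e f .
  qed
  show ?thesis unfolding L a b Xc_def[symmetric] by (rule fin_vec)
qed

lemma sum3_swap:
  "(\<Sum>b\<in>A. \<Sum>\<nu>\<in>B. \<Sum>\<mu>\<in>C. f b \<nu> \<mu>) = (\<Sum>\<mu>\<in>C. \<Sum>\<nu>\<in>B. \<Sum>b\<in>A. (f b \<nu> \<mu> :: real))"
proof -
  have "(\<Sum>b\<in>A. \<Sum>\<nu>\<in>B. \<Sum>\<mu>\<in>C. f b \<nu> \<mu>) = (\<Sum>b\<in>A. \<Sum>\<mu>\<in>C. \<Sum>\<nu>\<in>B. f b \<nu> \<mu>)"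
    by (rule sum.cong[OF refl]) (rule sum.swap)
  also have "\<dots> = (\<Sum>\<mu>\<in>C. \<Sum>b\<in>A. \<Sum>\<nu>\<in>B. f b \<nu> \<mu>)" by (rule sum.swap)
  also have "\<dots> = (\<Sum>\<mu>\<in>C. \<Sum>\<nu>\<in>B. \<Sum>b\<in>A. f b \<nu> \<mu>)"
    by (rule sum.cong[OF refl]) (rule sum.swap)
  finally show ?thesis .
qed

lemma div_alg:
  fixes hx H :: "4 \<Rightarrow> 4 \<Rightarrow> real" and hd Hd :: "4 \<Rightarrow> 4 \<Rightarrow> 4 \<Rightarrow> real"
  assumes R1: "\<And>\<mu> b c. (\<Sum>\<nu>\<in>UNIV. hd \<mu> b \<nu> * H \<nu> c + hx b \<nu> * Hd \<mu> \<nu> c) = 0"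
    and R2: "\<And>\<mu> \<nu>. (\<Sum>b\<in>UNIV. H \<mu> b * hx b \<nu>) = (if \<mu> = \<nu> then 1 else 0)"
  shows "(\<Sum>\<mu>\<in>UNIV. (v * (\<Sum>i\<in>UNIV. \<Sum>\<nu>\<in>UNIV. hd \<mu> i \<nu> * H \<nu> i)) * H \<mu> a + v * Hd \<mu> \<mu> a)
    = v * (- (\<Sum>b\<in>UNIV. \<Sum>\<nu>\<in>UNIV. \<Sum>\<mu>\<in>UNIV. hx b \<nu> * (H \<mu> a * Hd \<mu> \<nu> b - H \<mu> b * Hd \<mu> \<nu> a)))"
proof -
  have T2: "(\<Sum>b\<in>UNIV. \<Sum>\<nu>\<in>UNIV. \<Sum>\<mu>\<in>UNIV. hx b \<nu> * (H \<mu> b * Hd \<mu> \<nu> a)) = (\<Sum>\<mu>\<in>UNIV. Hd \<mu> \<mu> a)"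
  proof -
    have "(\<Sum>b\<in>UNIV. \<Sum>\<nu>\<in>UNIV. \<Sum>\<mu>\<in>UNIV. hx b \<nu> * (H \<mu> b * Hd \<mu> \<nu> a))
        = (\<Sum>\<mu>\<in>UNIV. \<Sum>\<nu>\<in>UNIV. \<Sum>b\<in>UNIV. hx b \<nu> * (H \<mu> b * Hd \<mu> \<nu> a))" by (rule sum3_swap)
    also have "\<dots> = (\<Sum>\<mu>\<in>UNIV. \<Sum>\<nu>\<in>UNIV. (\<Sum>b\<in>UNIV. H \<mu> b * hx b \<nu>) * Hd \<mu> \<nu> a)"
      by (simp add: sum_distrib_right sum_distrib_left ac_simps)
    also have "\<dots> = (\<Sum>\<mu>\<in>UNIV. Hd \<mu> \<mu> a)"
      unfolding R2 by (simp add: if01_mult)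
    finally show ?thesis .
  qed
  have T1: "(\<Sum>b\<in>UNIV. \<Sum>\<nu>\<in>UNIV. \<Sum>\<mu>\<in>UNIV. hx b \<nu> * (H \<mu> a * Hd \<mu> \<nu> b))
      = - (\<Sum>\<mu>\<in>UNIV. H \<mu> a * (\<Sum>i\<in>UNIV. \<Sum>\<nu>\<in>UNIV. hd \<mu> i \<nu> * H \<nu> i))"
  proof -
    have r: "(\<Sum>\<nu>\<in>UNIV. hx b \<nu> * Hd \<mu> \<nu> b) = - (\<Sum>\<nu>\<in>UNIV. hd \<mu> b \<nu> * H \<nu> b)" for \<mu> b
      using R1[of \<mu> b b] by (simp add: sum.distrib eq_neg_iff_add_eq_0 add.commute)
    have "(\<Sum>b\<in>UNIV. \<Sum>\<nu>\<in>UNIV. \<Sum>\<mu>\<in>UNIV. hx b \<nu> * (H \<mu> a * Hd \<mu> \<nu> b))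
        = (\<Sum>\<mu>\<in>UNIV. \<Sum>\<nu>\<in>UNIV. \<Sum>b\<in>UNIV. hx b \<nu> * (H \<mu> a * Hd \<mu> \<nu> b))" by (rule sum3_swap)
    also have "\<dots> = (\<Sum>\<mu>\<in>UNIV. H \<mu> a * (\<Sum>b\<in>UNIV. \<Sum>\<nu>\<in>UNIV. hx b \<nu> * Hd \<mu> \<nu> b))"
      by (simp add: sum_distrib_left ac_simps) (rule sum.cong[OF refl], rule sum.swap)
    also have "\<dots> = - (\<Sum>\<mu>\<in>UNIV. H \<mu> a * (\<Sum>i\<in>UNIV. \<Sum>\<nu>\<in>UNIV. hd \<mu> i \<nu> * H \<nu> i))"
      unfolding r by (simp add: sum_negf)
    finally show ?thesis .
  qed
  have E: "(\<Sum>b\<in>UNIV. \<Sum>\<nu>\<in>UNIV. \<Sum>\<mu>\<in>UNIV. hx b \<nu> * (H \<mu> a * Hd \<mu> \<nu> b - H \<mu> b * Hd \<mu> \<nu> a))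
     = (\<Sum>b\<in>UNIV. \<Sum>\<nu>\<in>UNIV. \<Sum>\<mu>\<in>UNIV. hx b \<nu> * (H \<mu> a * Hd \<mu> \<nu> b))
       - (\<Sum>b\<in>UNIV. \<Sum>\<nu>\<in>UNIV. \<Sum>\<mu>\<in>UNIV. hx b \<nu> * (H \<mu> b * Hd \<mu> \<nu> a))"
    by (simp only: right_diff_distrib sum_subtractf)
  have L: "(\<Sum>\<mu>\<in>UNIV. (v * (\<Sum>i\<in>UNIV. \<Sum>\<nu>\<in>UNIV. hd \<mu> i \<nu> * H \<nu> i)) * H \<mu> a + v * Hd \<mu> \<mu> a)
     = v * (\<Sum>\<mu>\<in>UNIV. H \<mu> a * (\<Sum>i\<in>UNIV. \<Sum>\<nu>\<in>UNIV. hd \<mu> i \<nu> * H \<nu> i)) + v * (\<Sum>\<mu>\<in>UNIV. Hd \<mu> \<mu> a)"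
    by (simp only: sum.distrib sum_distrib_left ac_simps)
  show ?thesis unfolding L E T1 T2 by (simp add: algebra_simps)
qed

lemma pd_combo:
  assumes fv: "(fv has_derivative fv') (at x)" and fH: "\<And>a. (fH a has_derivative fH' a) (at x)"
    and ps: "(\<psi> has_derivative \<psi>') (at x)"
  shows "pd \<mu> (\<lambda>y. ev (- (fv y *\<^sub>R (\<Sum>a\<in>UNIV. fH a y *\<^sub>R Zop a (\<psi> y))))) x
    = ev (- (fv x *\<^sub>R (\<Sum>a\<in>UNIV. fH a x *\<^sub>R Zop a (\<psi>' (axis \<mu> 1)) + fH' a (axis \<mu> 1) *\<^sub>R Zop a (\<psi> x))
            + fv' (axis \<mu> 1) *\<^sub>R (\<Sum>a\<in>UNIV. fH a x *\<^sub>R Zop a (\<psi> x))))"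
proof -
  have "((\<lambda>y. ev (- (fv y *\<^sub>R (\<Sum>a\<in>UNIV. fH a y *\<^sub>R Zop a (\<psi> y))))) has_derivative
     (\<lambda>w. ev (- (fv x *\<^sub>R (\<Sum>a\<in>UNIV. fH a x *\<^sub>R Zop a (\<psi>' w) + fH' a w *\<^sub>R Zop a (\<psi> x))
            + fv' w *\<^sub>R (\<Sum>a\<in>UNIV. fH a x *\<^sub>R Zop a (\<psi> x)))))) (at x)"
    by (rule bounded_linear.has_derivative[OF bounded_linear_ev], rule has_derivative_minus,
        rule has_derivative_scaleR[OF fv], rule has_derivative_sum, rule has_derivative_scaleR[OF fH],
        rule bounded_linear.has_derivative[OF bounded_linear_Zop ps])
  then show ?thesis by (rule pd_eq)
qed

lemma deriv_even:
  assumes U: "open U" "x \<in> U" and ev: "\<forall>y\<in>U. even_mv (\<psi> y)" and ps: "(\<psi> has_derivative \<psi>') (at x)"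
  shows "even_mv (\<psi>' w)"
  unfolding even_mv_def
proof (intro allI impI)
  fix K :: "4 set" assume K: "odd (card K)"
  have d1: "((\<lambda>y. \<psi> y $ K) has_derivative (\<lambda>w. \<psi>' w $ K)) (at x)"
    using bounded_linear.has_derivative[OF bounded_linear_vec_nth ps] .
  have d2: "((\<lambda>y. \<psi> y $ K) has_derivative (\<lambda>w. 0)) (at x)"
    by (rule has_derivative_transform_within_open[OF has_derivative_const U]) (use ev K in \<open>auto simp: even_mv_def\<close>)
  have "(\<lambda>w. \<psi>' w $ K) = (\<lambda>w. 0)" by (rule has_derivative_unique[OF d1 d2])
  then show "\<psi>' w $ K = 0" by metis
qed

lemma R1_lemma:
  assumes U: "open U" "x \<in> U" and inv: "\<forall>y\<in>U. invertible (h y)"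
    and hd: "(h has_derivative h') (at x)"
    and HD: "\<And>\<nu> c. ((\<lambda>y. hinv h y $ \<nu> $ c) has_derivative HD \<nu> c) (at x)"
  shows "(\<Sum>\<nu>\<in>UNIV. h' w $ b $ \<nu> * hinv h x $ \<nu> $ c + h x $ b $ \<nu> * HD \<nu> c w) = 0"
proof -
  let ?f = "\<lambda>y. \<Sum>\<nu>\<in>UNIV. h y $ b $ \<nu> * hinv h y $ \<nu> $ c"
  have d1: "(?f has_derivative (\<lambda>w. \<Sum>\<nu>\<in>UNIV. h x $ b $ \<nu> * HD \<nu> c w + h' w $ b $ \<nu> * hinv h x $ \<nu> $ c)) (at x)"
    by (rule has_derivative_sum, rule has_derivative_mult[OF comp_deriv[OF hd] HD])
  have fc: "?f y = (if b = c then 1 else 0)" if "y \<in> U" for y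
  proof -
    have "h y ** matrix_inv (h y) = mat 1" using matrix_inv_props(1) inv that by blast
    then have "(h y ** matrix_inv (h y)) $ b $ c = (mat 1 :: real^4^4) $ b $ c" by simp
    then show ?thesis unfolding hinv_def by (simp add: matrix_matrix_mult_def mat_def)
  qed
  have d2: "(?f has_derivative (\<lambda>w. 0)) (at x)"
    by (rule has_derivative_transform_within_open[OF has_derivative_const[of "if b = c then 1 else (0::real)"] U])
       (simp add: fc)
  have "(\<lambda>w. \<Sum>\<nu>\<in>UNIV. h x $ b $ \<nu> * HD \<nu> c w + h' w $ b $ \<nu> * hinv h x $ \<nu> $ c) = (\<lambda>w. 0)"
    by (rule has_derivative_unique[OF d1 d2])
  then show ?thesis by (metis (no_types, lifting) add.commute sum.cong)
qed

lemma dirac_G: "cmul (dirac_op h om x P Q G) g = dirac_op h om x P Q (cmul G g)"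
  unfolding dirac_op_def by (simp add: cmul_sum_left cmul_assoc)

theorem mainTheorem7:
  fixes h :: "real^4 \<Rightarrow> real^4^4"
    and om :: "real^4 \<Rightarrow> 4 \<Rightarrow> 4 \<Rightarrow> 4 \<Rightarrow> real"
    and m :: real
    and \<psi> :: "real^4 \<Rightarrow> mv"
    and U :: "(real^4) set"
    and x :: "real^4"
  assumes "open U"
    and "\<forall>y\<in>U. h differentiable (at y)"
    and "\<forall>y\<in>U. invertible (h y)"
    and "\<forall>y\<in>U. \<forall>a b c. om y a b c = - om y a c b"
    and "\<forall>y\<in>U. \<psi> differentiable (at y)"
    and "\<forall>y\<in>U. even_mv (\<psi> y)"
    and "x \<in> U"
  shows "(euler_lagrange h om m \<psi> x = 0 \<longleftrightarrow>
            dirac_op h om x (\<psi> x) (\<lambda>\<mu>. pd \<mu> \<psi> x) gamma021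
            + (1/2) *\<^sub>R cmul (cmul (torsion_cov h om x) (\<psi> x)) gamma021
            - m *\<^sub>R \<psi> x = 0)
       \<and> (dirac_op h om x (\<psi> x) (\<lambda>\<mu>. pd \<mu> \<psi> x) gamma021
            + (1/2) *\<^sub>R cmul (cmul (torsion_cov h om x) (\<psi> x)) gamma021
            - m *\<^sub>R \<psi> x = 0 \<longleftrightarrow>
          dirac_op h om x (\<psi> x) (\<lambda>\<mu>. pd \<mu> \<psi> x) gamma21
            + (1/2) *\<^sub>R cmul (cmul (torsion_cov h om x) (\<psi> x)) gamma21
            - m *\<^sub>R cmul (\<psi> x) (gen 0) = 0)
       \<and> (torsion_cov h om x = 0 \<longrightarrow>
          (euler_lagrange h om m \<psi> x = 0 \<longleftrightarrow>
           dirac_op h om x (\<psi> x) (\<lambda>\<mu>. pd \<mu> \<psi> x) gamma21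
            - m *\<^sub>R cmul (\<psi> x) (gen 0) = 0))"
proof -
  note U = assms(1) assms(7)
  have anti: "\<And>a b c. om x a b c = - om x a c b" using assms(4,7) by blast
  have inv: "\<forall>y\<in>U. invertible (h y)" using assms(3) .
  have invx: "invertible (h x)" using inv assms(7) by blast
  define h' where "h' = frechet_derivative h (at x)"
  have hd: "(h has_derivative h') (at x)"
    unfolding h'_def using assms(2,7) frechet_derivative_works by blast
  define \<psi>' where "\<psi>' = frechet_derivative \<psi> (at x)"
  have psd: "(\<psi> has_derivative \<psi>') (at x)"
    unfolding \<psi>'_def using assms(5,7) frechet_derivative_works by blast
  define P where "P = \<psi> x"
  define Q where "Q = (\<lambda>\<mu>. pd \<mu> \<psi> x)"
  have Qeq: "Q \<mu> = \<psi>' (axis \<mu> 1)" for \<mu> unfolding Q_def by (rule pd_eq[OF psd])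
  have Peven: "even_mv P" unfolding P_def using assms(6,7) by blast
  have Qeven: "even_mv (Q \<mu>)" for \<mu> unfolding Qeq by (rule deriv_even[OF U assms(6) psd])
  define HD where "HD \<nu> c = frechet_derivative (\<lambda>y. hinv h y $ \<nu> $ c) (at x)" for \<nu> c
  have HDd: "((\<lambda>y. hinv h y $ \<nu> $ c) has_derivative HD \<nu> c) (at x)" for \<nu> c
  proof -
    obtain D where "((\<lambda>y. hinv h y $ \<nu> $ c) has_derivative D) (at x)"
      using hinv_comp_deriv[OF U _ hd] inv by blast
    then show ?thesis unfolding HD_def using frechet_derivative_works differentiableI by blast
  qed
  have Hd_eq: "pd \<mu> (\<lambda>y. hinv h y $ \<nu> $ c) x = HD \<nu> c (axis \<mu> 1)" for \<mu> \<nu> c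
    by (rule pd_eq[OF HDd])
  define v where "v = vol h x"
  have vnz: "v \<noteq> 0" unfolding v_def vol_abs using invx invertible_det_nz by auto
  define vd where "vd \<mu> = v * (\<Sum>i\<in>UNIV. \<Sum>\<nu>\<in>UNIV. h' (axis \<mu> 1) $ i $ \<nu> * hinv h x $ \<nu> $ i)" for \<mu>
  have vdd: "(vol h has_derivative (\<lambda>w. v * (\<Sum>i\<in>UNIV. \<Sum>\<nu>\<in>UNIV. h' w $ i $ \<nu> * hinv h x $ \<nu> $ i))) (at x)"
    unfolding v_def by (rule vol_deriv[OF invx hd])
  have divsum: "(\<Sum>\<mu>\<in>UNIV. vd \<mu> * hinv h x $ \<mu> $ a + v * HD \<mu> a (axis \<mu> 1)) = v * (- (\<Sum>b\<in>UNIV. cstr h x a b b))" for a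
  proof -
    have R1: "(\<Sum>\<nu>\<in>UNIV. h' (axis \<mu> 1) $ b $ \<nu> * hinv h x $ \<nu> $ c + h x $ b $ \<nu> * HD \<nu> c (axis \<mu> 1)) = 0" for \<mu> b c
      by (rule R1_lemma[OF U inv hd HDd])
    have R2: "(\<Sum>b\<in>UNIV. hinv h x $ \<mu> $ b * h x $ b $ \<nu>) = (if \<mu> = \<nu> then 1 else 0)" for \<mu> \<nu>
    proof -
      have "matrix_inv (h x) ** h x = mat 1" using matrix_inv_props(2)[OF invx] .
      then have "(matrix_inv (h x) ** h x) $ \<mu> $ \<nu> = (mat 1 :: real^4^4) $ \<mu> $ \<nu>" by simp
      then show ?thesis unfolding hinv_def by (simp add: matrix_matrix_mult_def mat_def)
    qed
    have "(\<Sum>\<mu>\<in>UNIV. (v * (\<Sum>i\<in>UNIV. \<Sum>\<nu>\<in>UNIV. h' (axis \<mu> 1) $ i $ \<nu> * hinv h x $ \<nu> $ i)) * hinv h x $ \<mu> $ a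
         + v * pd \<mu> (\<lambda>y. hinv h y $ \<mu> $ a) x)
      = v * (- (\<Sum>b\<in>UNIV. \<Sum>\<nu>\<in>UNIV. \<Sum>\<mu>\<in>UNIV. h x $ b $ \<nu> * (hinv h x $ \<mu> $ a * pd \<mu> (\<lambda>y. hinv h y $ \<nu> $ b) x
           - hinv h x $ \<mu> $ b * pd \<mu> (\<lambda>y. hinv h y $ \<nu> $ a) x)))"
      by (rule div_alg[where hx="\<lambda>b \<nu>. h x $ b $ \<nu>" and H="\<lambda>\<nu> a. hinv h x $ \<nu> $ a"
            and hd="\<lambda>\<mu> b \<nu>. h' (axis \<mu> 1) $ b $ \<nu>" and Hd="\<lambda>\<mu> \<nu> a. pd \<mu> (\<lambda>y. hinv h y $ \<nu> $ a) x"])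
         (simp_all only: Hd_eq R1 R2)
    then show ?thesis unfolding vd_def cstr_def Hd_eq by (simp add: sum_distrib_left)
  qed
  define T0 where "T0 = dirac_op h om x P Q gamma021 + (1/2) *\<^sub>R cmul (cmul (torsion_cov h om x) P) gamma021 - m *\<^sub>R P"
  have T0even: "even_mv T0"
  proof -
    have A: "even_mv (dirac_op h om x P Q gamma021)"
      unfolding dirac_op_def spin_cov_def
      by (intro even_sum even_cmul_oo odd_cmul_oe odd_gen odd_gamma even_add even_scaleR
          even_cmul_ee even_omega Peven Qeven)
    have B: "even_mv ((1/2) *\<^sub>R cmul (cmul (torsion_cov h om x) P) gamma021)"
      by (intro even_scaleR even_cmul_oo odd_cmul_oe odd_torsion Peven odd_gamma)
    show ?thesis unfolding T0_def by (rule even_diff[OF even_add[OF A B] even_scaleR[OF Peven]])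
  qed
  have Fq: "(\<lambda>y. mvderiv_even (\<lambda>R. lagr h om m y (\<psi> y) ((\<lambda>\<nu>. pd \<nu> \<psi> y)(\<mu> := R))) (pd \<mu> \<psi> y))
      = (\<lambda>y. ev (- (vol h y *\<^sub>R (\<Sum>a\<in>UNIV. hinv h y $ \<mu> $ a *\<^sub>R Zop a (\<psi> y)))))" for \<mu>
    unfolding Zop_def by (rule ext) (rule mvd_Q)
  have pdF: "pd \<mu> (\<lambda>y. mvderiv_even (\<lambda>R. lagr h om m y (\<psi> y) ((\<lambda>\<nu>. pd \<nu> \<psi> y)(\<mu> := R))) (pd \<mu> \<psi> y)) x
     = ev (- (v *\<^sub>R (\<Sum>a\<in>UNIV. hinv h x $ \<mu> $ a *\<^sub>R Zop a (Q \<mu>) + HD \<mu> a (axis \<mu> 1) *\<^sub>R Zop a P)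
            + vd \<mu> *\<^sub>R (\<Sum>a\<in>UNIV. hinv h x $ \<mu> $ a *\<^sub>R Zop a P)))" for \<mu>
    unfolding Fq pd_combo[OF vdd HDd psd] Qeq P_def v_def vd_def ..
  have EL: "euler_lagrange h om m \<psi> x = (2 * v) *\<^sub>R T0"
  proof -
    have "euler_lagrange h om m \<psi> x = ev (v *\<^sub>R (dirac_op h om x P Q gamma021 + G1 om x P - (2 * m) *\<^sub>R P))
       - (\<Sum>\<mu>\<in>UNIV. ev (- (v *\<^sub>R (\<Sum>a\<in>UNIV. hinv h x $ \<mu> $ a *\<^sub>R Zop a (Q \<mu>) + HD \<mu> a (axis \<mu> 1) *\<^sub>R Zop a P)
            + vd \<mu> *\<^sub>R (\<Sum>a\<in>UNIV. hinv h x $ \<mu> $ a *\<^sub>R Zop a P))))"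
      unfolding euler_lagrange_def pdF mvd_P P_def Q_def v_def ..
    also have "\<dots> = ev (v *\<^sub>R (dirac_op h om x P Q gamma021 + G1 om x P - (2 * m) *\<^sub>R P)
       + (\<Sum>\<mu>\<in>UNIV. v *\<^sub>R (\<Sum>a\<in>UNIV. hinv h x $ \<mu> $ a *\<^sub>R Zop a (Q \<mu>) + HD \<mu> a (axis \<mu> 1) *\<^sub>R Zop a P)
            + vd \<mu> *\<^sub>R (\<Sum>a\<in>UNIV. hinv h x $ \<mu> $ a *\<^sub>R Zop a P)))"
      by (simp only: ev_add ev_sum ev_neg sum_negf diff_minus_eq_add)
    also have "\<dots> = ev ((2 * v) *\<^sub>R T0)"
      unfolding T0_def by (rule arg_cong[where f=ev], rule final_comb[where om=om and x=x and h=h and vd=vd and v=v and Hd="\<lambda>\<mu> a. HD \<mu> a (axis \<mu> 1)", OF anti divsum])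
    also have "\<dots> = (2 * v) *\<^sub>R T0" by (simp add: ev_scaleR ev_even[OF T0even])
    finally show ?thesis .
  qed
  have c1: "euler_lagrange h om m \<psi> x = 0 \<longleftrightarrow> T0 = 0"
    unfolding EL using vnz by simp
  define T2 where "T2 = dirac_op h om x P Q gamma21 + (1/2) *\<^sub>R cmul (cmul (torsion_cov h om x) P) gamma21 - m *\<^sub>R cmul P (gen 0)"
  have T2eq: "T2 = cmul T0 (gen 0)"
    unfolding T2_def T0_def by (simp add: cmul_lin dirac_G cmul_assoc gamma_gen0)
  have T0eq: "T0 = cmul T2 (gen 0)"
    unfolding T2eq cmul_assoc gen0_sq by simp
  have c2: "T0 = 0 \<longleftrightarrow> T2 = 0" using T0eq T2eq by auto
  have c3: "torsion_cov h om x = 0 \<Longrightarrow> T2 = dirac_op h om x P Q gamma21 - m *\<^sub>R cmul P (gen 0)"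
    unfolding T2_def by simp
  show ?thesis
    using c1 c2 c3 unfolding T0_def T2_def P_def Q_def by auto
qed

end
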